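(* If $\Sigma$ is an Ehrhart fan, then there is a well-defined $\mathbb{Z}$-linear map $\widetilde\chi_\Sigma:\underline{\mathrm{PE}}(\Sigma)\to\mathbb{Z}$ such that $\widetilde\chi_\Sigma([e^f])=\chi_\Sigma([f])$ for all $f\in\mathrm{PL}(\Sigma)$.
   Context: $N$ is a free abelian group, $N_\mathbb{R}=N\otimes\mathbb{R}$, $M=\mathrm{Hom}(N,\mathbb{Z})$ viewed as integral linear functions. A fan is unimodular if it contains the origin and for each cone the primitive ray generators $u_\rho\in N$ extend to a $\mathbb{Z}$-basis of $N$. $\mathrm{PL}(\Sigma)$: functions on $|\Sigma|$ agreeing on each cone with some element of $M$; $\mathrm{L}(\Sigma)$ the restrictions of elements of $M$; $\underline{\mathrm{PL}}(\Sigma)=\mathrm{PL}(\Sigma)/\mathrm{L}(\Sigma)$. $\mathrm{PE}(\Sigma)$ is the subring of real-valued functions on $|\Sigma|$ generated by $e^f$, $f\in\mathrm{PL}(\Sigma)$, and $\underline{\mathrm{PE}}(\Sigma)=\mathrm{PE}(\Sigma)/\langle e^\ell-1\mid\ell\in\mathrm{L}(\Sigma)\rangle$. Courant function $\delta_\rho$: $1$ at $u_\rho$, $0$ at other ray generators. Star fan $\Sigma^\sigma$: image in $N_\mathbb{R}/\mathrm{span}(\sigma)$ (lattice $N/\mathrm{Span}_\mathbb{Z}(\sigma\cap N)$) of all faces of cones containing $\sigma$; $[f]^\sigma$ is the class of the function induced by $f-m$, $m\in M$ agreeing with $f$ on $\sigma$. A unimodular fan $\Sigma$ is Ehrhart (recursively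 on dimension) if (1) $\Sigma^\rho$ is Ehrhart for every ray $\rho$, and (2) there is $\chi_\Sigma:\underline{\mathrm{PL}}(\Sigma)\to\mathbb{Z}$ with $\chi_\Sigma(0)=1$ and $\chi_\Sigma([f])=\chi_\Sigma([f-\delta_\rho])+\chi_{\Sigma^\rho}([f]^\rho)$ for all $f\in\mathrm{PL}(\Sigma)$, $\rho\in\Sigma(1)$. Zero-dimensional fans are Ehrhart with $\chi=1$; such $\chi_\Sigma$ is unique (the Ehrhart polynomial). *)

theory Defs
  imports "HOL-Analysis.Analysis"
begin

text \<open>
The ambient real vector space is \<open>V = real^'n\<close> with the standard lattice
\<open>Lam\<close> of integer vectors.  A general lattice \<open>N\<close> (free abelian of finite rank) with
\<open>N_R = N \<otimes> R\<close> is modelled as the quotient \<open>V / W\<close> with lattice \<open>(Lam + W)/W\<close>, where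
\<open>W\<close> is a rational subspace (spanned by lattice vectors).  Objects on the quotient are
represented by W-saturated objects on \<open>V\<close>: cones are W-saturated subsets of \<open>V\<close>,
functions are functions on \<open>V\<close>, elements of \<open>M\<close> are integer vectors orthogonal to \<open>W\<close>.
This keeps the ambient type fixed, so that star fans (quotients by span of a cone)
are obtained by enlarging \<open>W\<close>.  Functions on the support are represented by
functions on \<open>V\<close> that vanish outside the support.
\<close>

definition Lam :: "(real^'n) set" where
  "Lam = {x. \<forall>i. x $ i \<in> \<int>}"

text \<open>M for the lattice (Lam+W)/W: integral linear functionals vanishing on W.\<close>
definition dualL :: "(real^'n) set \<Rightarrow> (real^'n) set" where
  "dualL W = {m. (\<forall>i. m $ i \<in> \<int>) \<and> (\<forall>w\<in>W. m \<bullet> w = 0)}"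

definition cone_mod :: "(real^'n) set \<Rightarrow> (real^'n) set \<Rightarrow> (real^'n) set" where
  "cone_mod W U = {x. \<exists>c. (\<forall>u\<in>U. c u \<ge> 0) \<and> x - (\<Sum>u\<in>U. c u *\<^sub>R u) \<in> W}"

text \<open>B is (a set of representatives of) a Z-basis of the lattice (Lam+W)/W.\<close>
definition zbasis_mod :: "(real^'n) set \<Rightarrow> (real^'n) set \<Rightarrow> bool" where
  "zbasis_mod W B \<longleftrightarrow> finite B \<and> B \<subseteq> Lam \<and>
     (\<forall>x\<in>Lam. \<exists>a::real^'n \<Rightarrow> int. x - (\<Sum>b\<in>B. of_int (a b) *\<^sub>R b) \<in> W) \<and>
     (\<forall>a a' :: real^'n \<Rightarrow> int.
        (\<Sum>b\<in>B. of_int (a b) *\<^sub>R b) - (\<Sum>b\<in>B. of_int (a' b) *\<^sub>R b) \<in> W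
        \<longrightarrow> (\<forall>b\<in>B. a b = a' b))"

definition face_mod :: "(real^'n) set \<Rightarrow> (real^'n) set \<Rightarrow> (real^'n) set \<Rightarrow> bool" where
  "face_mod W F C \<longleftrightarrow> (\<exists>m. (\<forall>w\<in>W. m \<bullet> w = 0) \<and> (\<forall>x\<in>C. m \<bullet> x \<ge> 0) \<and>
                          F = C \<inter> {x. m \<bullet> x = 0})"

text \<open>Unimodular fan in V/W (containing the origin cone, which is W itself).\<close>
definition unimodular_fan :: "(real^'n) set \<Rightarrow> (real^'n) set set \<Rightarrow> bool" where
  "unimodular_fan W Fan \<longleftrightarrow>
     subspace W \<and> W = span (W \<inter> Lam) \<and> finite Fan \<and> W \<in> Fan \<and>
     (\<forall>C\<in>Fan. \<exists>U B. U \<subseteq> B \<and> zbasis_mod W B \<and> C = cone_mod W U) \<and>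
     (\<forall>C\<in>Fan. \<forall>F. face_mod W F C \<longrightarrow> F \<in> Fan) \<and>
     (\<forall>C\<in>Fan. \<forall>D\<in>Fan. face_mod W (C \<inter> D) C)"

definition supp :: "(real^'n) set set \<Rightarrow> (real^'n) set" where
  "supp Fan = \<Union>Fan"

definition is_ray_gen :: "(real^'n) set \<Rightarrow> (real^'n) set \<Rightarrow> real^'n \<Rightarrow> bool" where
  "is_ray_gen W rho u \<longleftrightarrow> u \<in> Lam \<and> u \<notin> W \<and> rho = cone_mod W {u} \<and>
     (\<forall>x\<in>Lam \<inter> rho. \<exists>k::nat. x - of_nat k *\<^sub>R u \<in> W)"

definition rays :: "(real^'n) set \<Rightarrow> (real^'n) set set \<Rightarrow> (real^'n) set set" where
  "rays W Fan = {rho\<in>Fan. \<exists>u. is_ray_gen W rho u}"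

definition ray_gen :: "(real^'n) set \<Rightarrow> (real^'n) set \<Rightarrow> real^'n" where
  "ray_gen W rho = (SOME u. is_ray_gen W rho u)"

definition PL :: "(real^'n) set \<Rightarrow> (real^'n) set set \<Rightarrow> (real^'n \<Rightarrow> real) set" where
  "PL W Fan = {f. (\<forall>x. x \<notin> supp Fan \<longrightarrow> f x = 0) \<and>
                  (\<forall>C\<in>Fan. \<exists>m\<in>dualL W. \<forall>x\<in>C. f x = m \<bullet> x)}"

definition L :: "(real^'n) set \<Rightarrow> (real^'n) set set \<Rightarrow> (real^'n \<Rightarrow> real) set" where
  "L W Fan = {(\<lambda>x. if x \<in> supp Fan then m \<bullet> x else 0) | m. m \<in> dualL W}"

definition courant :: "(real^'n) set \<Rightarrow> (real^'n) set set \<Rightarrow> (real^'n) set \<Rightarrow> (real^'n \<Rightarrow> real)" where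
  "courant W Fan rho = (THE f. f \<in> PL W Fan \<and> f (ray_gen W rho) = 1 \<and>
       (\<forall>rho'\<in>rays W Fan. rho' \<noteq> rho \<longrightarrow> f (ray_gen W rho') = 0))"

definition star_space :: "(real^'n) set \<Rightarrow> (real^'n) set \<Rightarrow> (real^'n) set" where
  "star_space W rho = span (insert (ray_gen W rho) W)"

definition star_fan :: "(real^'n) set \<Rightarrow> (real^'n) set set \<Rightarrow> (real^'n) set \<Rightarrow> (real^'n) set set" where
  "star_fan W Fan rho =
     {{x + w | x w. x \<in> tau \<and> w \<in> star_space W rho} | tau.
        \<exists>C\<in>Fan. rho \<subseteq> C \<and> face_mod W tau C}"

text \<open>The function [f]^rho on the star fan induced by f - m, m agreeing with f on rho.\<close>
definition star_fun :: "(real^'n) set \<Rightarrow> (real^'n) set set \<Rightarrow> (real^'n) set \<Rightarrow> (real^'n \<Rightarrow> real) \<Rightarrow> (real^'n \<Rightarrow> real)" where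
  "star_fun W Fan rho f =
     (let m = (SOME m. m \<in> dualL W \<and> (\<forall>x\<in>rho. f x = m \<bullet> x)) in
      (\<lambda>x. if x \<in> supp (star_fan W Fan rho) then
             (let y = (SOME y. (\<exists>C\<in>Fan. rho \<subseteq> C \<and> y \<in> C) \<and> x - y \<in> star_space W rho)
              in f y - m \<bullet> y)
           else 0))"

text \<open>Ehrhart fans, with their Ehrhart polynomial chi (a map on PL invariant under L,
  i.e. a map on PL/L).  The family chis gives the Ehrhart polynomials of the star fans
  (unique by the paper).\<close>
inductive ehrhart_with :: "(real^'n) set \<Rightarrow> (real^'n) set set \<Rightarrow> ((real^'n \<Rightarrow> real) \<Rightarrow> int) \<Rightarrow> bool" where
  "\<lbrakk> unimodular_fan W Fan;
     \<forall>rho\<in>rays W Fan. ehrhart_with (star_space W rho) (star_fan W Fan rho) (chis rho);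
     \<forall>f\<in>PL W Fan. \<forall>l\<in>L W Fan. chi (\<lambda>x. f x + l x) = chi f;
     chi (\<lambda>x. 0) = 1;
     \<forall>f\<in>PL W Fan. \<forall>rho\<in>rays W Fan.
        chi f = chi (\<lambda>x. f x - courant W Fan rho x) + chis rho (star_fun W Fan rho f) \<rbrakk>
   \<Longrightarrow> ehrhart_with W Fan chi"

definition is_ehrhart :: "(real^'n) set \<Rightarrow> (real^'n) set set \<Rightarrow> bool" where
  "is_ehrhart W Fan \<longleftrightarrow> (\<exists>chi. ehrhart_with W Fan chi)"

definition expPL :: "(real^'n) set set \<Rightarrow> (real^'n \<Rightarrow> real) \<Rightarrow> (real^'n \<Rightarrow> real)" where
  "expPL Fan f = (\<lambda>x. if x \<in> supp Fan then exp (f x) else 0)"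

inductive_set PE :: "(real^'n) set \<Rightarrow> (real^'n) set set \<Rightarrow> (real^'n \<Rightarrow> real) set"
  for W Fan where
  gen: "f \<in> PL W Fan \<Longrightarrow> expPL Fan f \<in> PE W Fan"
| add: "a \<in> PE W Fan \<Longrightarrow> b \<in> PE W Fan \<Longrightarrow> (\<lambda>x. a x + b x) \<in> PE W Fan"
| neg: "a \<in> PE W Fan \<Longrightarrow> (\<lambda>x. - a x) \<in> PE W Fan"
| mult: "a \<in> PE W Fan \<Longrightarrow> b \<in> PE W Fan \<Longrightarrow> (\<lambda>x. a x * b x) \<in> PE W Fan"

inductive_set PE_ideal :: "(real^'n) set \<Rightarrow> (real^'n) set set \<Rightarrow> (real^'n \<Rightarrow> real) set"
  for W Fan where
  gen: "l \<in> L W Fan \<Longrightarrow> (\<lambda>x. expPL Fan l x - expPL Fan (\<lambda>_. 0) x) \<in> PE_ideal W Fan"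
| zero: "(\<lambda>x. 0) \<in> PE_ideal W Fan"
| add: "a \<in> PE_ideal W Fan \<Longrightarrow> b \<in> PE_ideal W Fan \<Longrightarrow> (\<lambda>x. a x + b x) \<in> PE_ideal W Fan"
| mult: "p \<in> PE W Fan \<Longrightarrow> a \<in> PE_ideal W Fan \<Longrightarrow> (\<lambda>x. p x * a x) \<in> PE_ideal W Fan"

end

theory Submission
  imports Defs "HOL-Real_Asymp.Real_Asymp"
begin


lemma Lam_inner_int: "m \<in> dualL W \<Longrightarrow> x \<in> Lam \<Longrightarrow> m \<bullet> x \<in> \<int>"
  unfolding dualL_def Lam_def inner_vec_def
  by (auto intro!: Ints_sum Ints_mult simp: inner_real_def)

lemma subspace_sum_scaled:
  assumes "subspace W" "\<And>i. i \<in> I \<Longrightarrow> v i \<in> W"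
  shows "(\<Sum>i\<in>I. c i *\<^sub>R v i) \<in> W"
  by (rule subspace_sum[OF assms(1)]) (rule subspace_scale[OF assms(1) assms(2)])

lemma zbasis_unique:
  assumes "zbasis_mod W B" "subspace W"
    "x - (\<Sum>b\<in>B. of_int (a b) *\<^sub>R b) \<in> W" "x - (\<Sum>b\<in>B. of_int (a' b) *\<^sub>R b) \<in> W" "b \<in> B"
  shows "a b = a' b"
proof -
  have "(\<Sum>b\<in>B. of_int (a b) *\<^sub>R b) - (\<Sum>b\<in>B. of_int (a' b) *\<^sub>R b) \<in> W"
    using subspace_diff[OF assms(2) assms(4) assms(3)] by (simp add: algebra_simps)
  then show ?thesis using assms(1,5) unfolding zbasis_mod_def by blast
qed

lemma ortho_span:
  assumes "\<forall>w\<in>S. m \<bullet> w = 0" "w \<in> span S"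
  shows "m \<bullet> w = (0::real)"
  using orthogonal_to_span[OF assms(2), of m] assms(1) unfolding orthogonal_def by blast

lemma dual_exists:
  fixes W :: "(real^'n) set"
  assumes sub: "subspace W" and rat: "W = span (W \<inter> Lam)" and zb: "zbasis_mod W B" and u: "u \<in> B"
  shows "\<exists>m. m \<in> dualL W \<and> (\<forall>b\<in>B. m \<bullet> b = (if b = u then 1 else 0))"
proof -
  have fin: "finite B" using zb unfolding zbasis_mod_def by blast
  have ax: "axis j 1 \<in> Lam" for j :: 'n unfolding Lam_def axis_def by auto
  define aj where "aj j = (SOME a::real^'n \<Rightarrow> int. axis j 1 - (\<Sum>b\<in>B. of_int (a b) *\<^sub>R b) \<in> W)" for j :: 'n
  have aj: "axis j 1 - (\<Sum>b\<in>B. of_int (aj j b) *\<^sub>R b) \<in> W" for j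
  proof -
    have "\<exists>a::real^'n \<Rightarrow> int. axis j 1 - (\<Sum>b\<in>B. of_int (a b) *\<^sub>R b) \<in> W"
      using zb ax[of j] unfolding zbasis_mod_def by blast
    then show ?thesis unfolding aj_def by (rule someI_ex)
  qed
  define m :: "real^'n" where "m = (\<chi> j. of_int (aj j u))"
  have key: "x - (\<Sum>b\<in>B. of_int (A b) *\<^sub>R b) \<in> W \<Longrightarrow> m \<bullet> x = of_int (A u)" if xL: "x \<in> Lam" for x A
  proof -
    assume xA: "x - (\<Sum>b\<in>B. of_int (A b) *\<^sub>R b) \<in> W"
    define xi where "xi j = (THE k. x $ j = of_int k)" for j
    have xi: "x $ j = of_int (xi j)" for j
    proof -
      have "x $ j \<in> \<int>" using xL unfolding Lam_def by auto
      then obtain k where "x $ j = of_int k" by (auto elim: Ints_cases)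
      moreover have "(THE k. x $ j = of_int k) = k" by (rule the_equality) (use \<open>x $ j = of_int k\<close> in auto)
      ultimately show ?thesis unfolding xi_def by simp
    qed
    define A' where "A' b = (\<Sum>j\<in>UNIV. xi j * aj j b)" for b
    have xexp: "x = (\<Sum>j\<in>UNIV. of_int (xi j) *\<^sub>R axis j 1)"
      using basis_expansion[of x] by (simp add: xi scalar_mult_eq_scaleR)
    have "(\<Sum>j\<in>UNIV. of_int (xi j) *\<^sub>R (axis j 1 - (\<Sum>b\<in>B. of_int (aj j b) *\<^sub>R b))) \<in> W"
      by (rule subspace_sum_scaled[OF sub aj])
    moreover have "(\<Sum>j\<in>UNIV. of_int (xi j) *\<^sub>R (axis j 1 - (\<Sum>b\<in>B. of_int (aj j b) *\<^sub>R b)))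
        = x - (\<Sum>b\<in>B. of_int (A' b) *\<^sub>R b)"
    proof -
      have "(\<Sum>j\<in>UNIV. of_int (xi j) *\<^sub>R (axis j 1 - (\<Sum>b\<in>B. of_int (aj j b) *\<^sub>R b)))
          = (\<Sum>j\<in>UNIV. of_int (xi j) *\<^sub>R axis j 1) - (\<Sum>j\<in>UNIV. \<Sum>b\<in>B. of_int (xi j * aj j b) *\<^sub>R b)"
        by (simp add: scaleR_diff_right sum_subtractf scaleR_sum_right)
      also have "(\<Sum>j\<in>UNIV. \<Sum>b\<in>B. of_int (xi j * aj j b) *\<^sub>R b) = (\<Sum>b\<in>B. \<Sum>j\<in>UNIV. of_int (xi j * aj j b) *\<^sub>R b)"
        by (rule sum.swap)
      also have "\<dots> = (\<Sum>b\<in>B. of_int (A' b) *\<^sub>R b)"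
        unfolding A'_def by (simp add: scaleR_sum_left)
      finally show ?thesis using xexp by simp
    qed
    ultimately have "x - (\<Sum>b\<in>B. of_int (A' b) *\<^sub>R b) \<in> W" by simp
    then have "A u = A' u" using zbasis_unique[OF zb sub xA _ u] by blast
    moreover have "m \<bullet> x = of_int (A' u)"
      unfolding A'_def m_def inner_vec_def by (simp add: xi inner_real_def mult.commute)
    ultimately show ?thesis by simp
  qed
  have "m \<in> dualL W"
    unfolding dualL_def
  proof (intro CollectI conjI ballI allI)
    show "m $ i \<in> \<int>" for i unfolding m_def by simp
    fix w assume "w \<in> W"
    have "\<forall>w\<in>W \<inter> Lam. m \<bullet> w = 0"
    proof
      fix w assume w: "w \<in> W \<inter> Lam"
      have "w - (\<Sum>b\<in>B. of_int ((\<lambda>_. 0::int) b) *\<^sub>R b) \<in> W" using w by simp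
      from key[OF _ this] w show "m \<bullet> w = 0" by simp
    qed
    then show "m \<bullet> w = 0" using ortho_span \<open>w \<in> W\<close> rat by blast
  qed
  moreover have "\<forall>b\<in>B. m \<bullet> b = (if b = u then 1 else 0)"
  proof
    fix b assume b: "b \<in> B"
    have bL: "b \<in> Lam" using zb b unfolding zbasis_mod_def by blast
    have "b - (\<Sum>b'\<in>B. of_int ((\<lambda>b'. if b' = b then 1 else 0::int) b') *\<^sub>R b') = 0"
      using b fin by (simp add: if_distrib[of "\<lambda>k. of_int k *\<^sub>R _"] cong: if_cong)
    then have "b - (\<Sum>b'\<in>B. of_int ((\<lambda>b'. if b' = b then 1 else 0::int) b') *\<^sub>R b') \<in> W"
      using sub subspace_0 by metis
    from key[OF bL this] show "m \<bullet> b = (if b = u then 1 else 0)" by auto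
  qed
  ultimately show ?thesis by blast
qed


definition dualm :: "(real^'n) set \<Rightarrow> (real^'n) set \<Rightarrow> real^'n \<Rightarrow> real^'n" where
  "dualm W B u = (SOME m. m \<in> dualL W \<and> (\<forall>b\<in>B. m \<bullet> b = (if b = u then 1 else 0)))"

definition good :: "(real^'n) set \<Rightarrow> bool" where
  "good W \<longleftrightarrow> subspace W \<and> W = span (W \<inter> Lam)"

lemma good_sub: "good W \<Longrightarrow> subspace W" unfolding good_def by blast

lemma dualm:
  assumes "good W" "zbasis_mod W B" "u \<in> B"
  shows "dualm W B u \<in> dualL W" "\<And>b. b \<in> B \<Longrightarrow> dualm W B u \<bullet> b = (if b = u then 1 else 0)"
proof -
  have "\<exists>m. m \<in> dualL W \<and> (\<forall>b\<in>B. m \<bullet> b = (if b = u then 1 else 0))"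
    using dual_exists assms unfolding good_def by blast
  then have "dualm W B u \<in> dualL W \<and> (\<forall>b\<in>B. dualm W B u \<bullet> b = (if b = u then 1 else 0))"
    unfolding dualm_def by (rule someI_ex)
  then show "dualm W B u \<in> dualL W" "\<And>b. b \<in> B \<Longrightarrow> dualm W B u \<bullet> b = (if b = u then 1 else 0)"
    by auto
qed

lemma dualL_orth: "m \<in> dualL W \<Longrightarrow> w \<in> W \<Longrightarrow> m \<bullet> w = 0"
  unfolding dualL_def by blast

lemma zb_fin: "zbasis_mod W B \<Longrightarrow> finite B" unfolding zbasis_mod_def by blast
lemma zb_Lam: "zbasis_mod W B \<Longrightarrow> B \<subseteq> Lam" unfolding zbasis_mod_def by blast

lemma orth_mod:
  assumes "m \<in> dualL W" "x - y \<in> W"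
  shows "m \<bullet> x = m \<bullet> y"
  using dualL_orth[OF assms] by (simp add: inner_diff_right)

lemma coord:
  assumes "good W" "zbasis_mod W B" "U \<subseteq> B" "x - (\<Sum>u\<in>U. c u *\<^sub>R u) \<in> W" "b \<in> B"
  shows "dualm W B b \<bullet> x = (if b \<in> U then c b else 0)"
proof -
  have fin: "finite U" using zb_fin[OF assms(2)] assms(3) finite_subset by blast
  have "dualm W B b \<bullet> x = dualm W B b \<bullet> (\<Sum>u\<in>U. c u *\<^sub>R u)"
    by (rule orth_mod[OF dualm(1)[OF assms(1,2,5)] assms(4)])
  also have "\<dots> = (\<Sum>u\<in>U. c u * (if u = b then 1 else 0))"
    using assms(3) by (simp add: inner_sum_right dualm(2)[OF assms(1,2,5)] subset_iff)
  also have "\<dots> = (if b \<in> U then c b else 0)"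
    using fin by (simp add: if_distrib cong: if_cong)
  finally show ?thesis .
qed

lemma cone_sat:
  assumes "subspace W" "x \<in> cone_mod W U" "x - y \<in> W"
  shows "y \<in> cone_mod W U"
proof -
  obtain c where c: "\<forall>u\<in>U. c u \<ge> 0" "x - (\<Sum>u\<in>U. c u *\<^sub>R u) \<in> W"
    using assms(2) unfolding cone_mod_def by blast
  have "y - (\<Sum>u\<in>U. c u *\<^sub>R u) = (x - (\<Sum>u\<in>U. c u *\<^sub>R u)) - (x - y)" by simp
  also have "\<dots> \<in> W" using subspace_diff[OF assms(1) c(2) assms(3)] .
  finally show ?thesis using c(1) unfolding cone_mod_def by blast
qed

lemma W_sub_cone: "subspace W \<Longrightarrow> w \<in> W \<Longrightarrow> w \<in> cone_mod W U"
  unfolding cone_mod_def by (rule CollectI, rule exI[of _ "\<lambda>_. 0"]) simp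

lemma cone1_iff: "x \<in> cone_mod W {u} \<longleftrightarrow> (\<exists>t\<ge>0. x - t *\<^sub>R u \<in> W)"
  unfolding cone_mod_def by auto

lemma self_cone1: "subspace W \<Longrightarrow> u \<in> cone_mod W {u}"
  unfolding cone1_iff by (rule exI[of _ 1]) (simp add: subspace_0)

lemma scale_notin:
  assumes "subspace W" "a *\<^sub>R g \<in> W" "g \<notin> W"
  shows "a = 0"
proof (rule ccontr)
  assume "a \<noteq> 0"
  then have "g = (1/a) *\<^sub>R (a *\<^sub>R g)" by simp
  then have "g \<in> W" using subspace_scale[OF assms(1) assms(2)] by metis
  then show False using assms(3) by blast
qed

lemma ray_gen_unique:
  assumes sub: "subspace W" and u: "is_ray_gen W \<rho> u" and v: "is_ray_gen W \<rho> v"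
  shows "u - v \<in> W"
proof -
  have vr: "v \<in> \<rho>" using v self_cone1[OF sub] unfolding is_ray_gen_def by auto
  have ur: "u \<in> \<rho>" using u self_cone1[OF sub] unfolding is_ray_gen_def by auto
  obtain k :: nat where k: "v - of_nat k *\<^sub>R u \<in> W" using u v vr unfolding is_ray_gen_def by blast
  obtain k' :: nat where k': "u - of_nat k' *\<^sub>R v \<in> W" using u v ur unfolding is_ray_gen_def by blast
  have "(u - of_nat k' *\<^sub>R v) + of_nat k' *\<^sub>R (v - of_nat k *\<^sub>R u) \<in> W"
    using sub k k' by (intro subspace_add subspace_scale) auto
  moreover have "(u - of_nat k' *\<^sub>R v) + of_nat k' *\<^sub>R (v - of_nat k *\<^sub>R u) = (1 - of_nat (k' * k)) *\<^sub>R u"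
    by (simp add: algebra_simps)
  ultimately have "(1 - of_nat (k' * k) :: real) = 0"
    using scale_notin[OF sub] u unfolding is_ray_gen_def by metis
  then have "k' * k = 1" by (metis eq_iff_diff_eq_0 of_nat_1 of_nat_eq_iff)
  then have "k = 1" by simp
  then show ?thesis using k sub by (metis scaleR_one of_nat_1 subspace_neg minus_diff_eq)
qed

lemma cone1_cong:
  assumes "subspace W" "u - v \<in> W"
  shows "cone_mod W {u} = cone_mod W {v}"
proof -
  have *: "x - t *\<^sub>R u \<in> W \<longleftrightarrow> x - t *\<^sub>R v \<in> W" for x t
  proof -
    have "t *\<^sub>R (u - v) \<in> W" using assms subspace_scale by blast
    then show ?thesis using assms(1)
      by (metis (no_types, lifting) diff_add_cancel diff_diff_eq2 scaleR_diff_right subspace_add subspace_diff)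
  qed
  show ?thesis unfolding cone1_iff set_eq_iff using * by blast
qed


lemma uf_good: "unimodular_fan W Fan \<Longrightarrow> good W"
  unfolding unimodular_fan_def good_def by blast
lemma uf_sub: "unimodular_fan W Fan \<Longrightarrow> subspace W"
  unfolding unimodular_fan_def by blast
lemma uf_rep: "unimodular_fan W Fan \<Longrightarrow> C \<in> Fan \<Longrightarrow> \<exists>U B. U \<subseteq> B \<and> zbasis_mod W B \<and> C = cone_mod W U"
  unfolding unimodular_fan_def by blast
lemma uf_face: "unimodular_fan W Fan \<Longrightarrow> C \<in> Fan \<Longrightarrow> face_mod W F C \<Longrightarrow> F \<in> Fan"
  unfolding unimodular_fan_def by blast
lemma uf_inter: "unimodular_fan W Fan \<Longrightarrow> C \<in> Fan \<Longrightarrow> D \<in> Fan \<Longrightarrow> face_mod W (C \<inter> D) C"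
  unfolding unimodular_fan_def by blast
lemma uf_W: "unimodular_fan W Fan \<Longrightarrow> W \<in> Fan"
  unfolding unimodular_fan_def by blast
lemma uf_fin: "unimodular_fan W Fan \<Longrightarrow> finite Fan"
  unfolding unimodular_fan_def by blast

lemma sum_single_coef:
  assumes "finite U" "u \<in> U"
  shows "(\<Sum>u'\<in>U. (if u' = u then t else 0) *\<^sub>R u') = t *\<^sub>R (u::real^'n)"
proof -
  have "(\<Sum>u'\<in>U. (if u' = u then t else 0) *\<^sub>R u') = (\<Sum>u'\<in>U. if u' = u then t *\<^sub>R u' else 0)"
    by (rule sum.cong) auto
  also have "\<dots> = t *\<^sub>R u" using assms by (simp add: sum.delta')
  finally show ?thesis .
qed

lemma in_cone1_sub:
  assumes "subspace W" "finite U" "u \<in> U" "x \<in> cone_mod W {u}"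
  shows "x \<in> cone_mod W U"
proof -
  obtain t where t: "t \<ge> 0" "x - t *\<^sub>R u \<in> W" using assms(4) unfolding cone1_iff by blast
  show ?thesis unfolding cone_mod_def
    by (rule CollectI, rule exI[of _ "\<lambda>u'. if u' = u then t else 0"])
       (use t sum_single_coef[OF assms(2,3)] in auto)
qed

lemma gen_in_Lam_notW:
  assumes "good W" "zbasis_mod W B" "u \<in> B"
  shows "u \<in> Lam" "u \<notin> W"
proof -
  show "u \<in> Lam" using zb_Lam[OF assms(2)] assms(3) by blast
  show "u \<notin> W"
  proof
    assume "u \<in> W"
    then have "dualm W B u \<bullet> u = 0" using dualL_orth dualm(1)[OF assms] by blast
    then show False using dualm(2)[OF assms assms(3)] by simp
  qed
qed

lemma ray_of_gen:
  assumes uf: "unimodular_fan W Fan" and C: "C \<in> Fan" "C = cone_mod W U" and UB: "U \<subseteq> B"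
    and zb: "zbasis_mod W B" and u: "u \<in> U"
  shows "cone_mod W {u} \<in> rays W Fan" "is_ray_gen W (cone_mod W {u}) u"
proof -
  have g: "good W" using uf_good[OF uf] .
  have sub: "subspace W" using uf_sub[OF uf] .
  have finU: "finite U" using zb_fin[OF zb] UB finite_subset by blast
  have uB: "u \<in> B" using u UB by blast
  define m where "m = (\<Sum>u'\<in>U - {u}. dualm W B u')"
  have mW: "\<forall>w\<in>W. m \<bullet> w = 0"
    unfolding m_def inner_sum_left using UB by (intro ballI sum.neutral dualL_orth[OF dualm(1)[OF g zb]]) auto
  have mx: "m \<bullet> x = (\<Sum>u'\<in>U - {u}. c u')" if "x - (\<Sum>u\<in>U. c u *\<^sub>R u) \<in> W" for x c
    unfolding m_def inner_sum_left using coord[OF g zb UB that] UB by (intro sum.cong) auto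
  have face: "face_mod W (cone_mod W {u}) C"
    unfolding face_mod_def
  proof (intro exI[of _ m] conjI)
    show "\<forall>w\<in>W. m \<bullet> w = 0" by (rule mW)
    show "\<forall>x\<in>C. 0 \<le> m \<bullet> x"
    proof
      fix x assume "x \<in> C"
      then obtain c where c: "\<forall>u\<in>U. c u \<ge> 0" "x - (\<Sum>u\<in>U. c u *\<^sub>R u) \<in> W"
        using C unfolding cone_mod_def by blast
      have "0 \<le> (\<Sum>u'\<in>U - {u}. c u')" using c(1) by (intro sum_nonneg) auto
      then show "0 \<le> m \<bullet> x" using mx[OF c(2)] by simp
    qed
    show "cone_mod W {u} = C \<inter> {x. m \<bullet> x = 0}"
    proof (intro set_eqI iffI)
      fix x assume x: "x \<in> cone_mod W {u}"
      then obtain t where t: "t \<ge> 0" "x - t *\<^sub>R u \<in> W" unfolding cone1_iff by blast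
      have "x \<in> C" using in_cone1_sub[OF sub finU u x] C by simp
      moreover have "x - (\<Sum>u'\<in>U. (if u' = u then t else 0) *\<^sub>R u') \<in> W"
        using t sum_single_coef[OF finU u] by simp
      from mx[OF this] have "m \<bullet> x = 0" by simp
      ultimately show "x \<in> C \<inter> {x. m \<bullet> x = 0}" by blast
    next
      fix x assume x: "x \<in> C \<inter> {x. m \<bullet> x = 0}"
      then obtain c where c: "\<forall>u\<in>U. c u \<ge> 0" "x - (\<Sum>u\<in>U. c u *\<^sub>R u) \<in> W"
        using C unfolding cone_mod_def by blast
      have "(\<Sum>u'\<in>U - {u}. c u') = 0" using mx[OF c(2)] x by simp
      moreover have "finite (U - {u})" using finU by simp
      moreover have "\<forall>u'\<in>U - {u}. 0 \<le> c u'" using c(1) by blast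
      ultimately have z: "\<forall>u'\<in>U - {u}. c u' = 0" using sum_nonneg_eq_0_iff by blast
      have "(\<Sum>u'\<in>U. c u' *\<^sub>R u') = (\<Sum>u'\<in>U. (if u' = u then c u else 0) *\<^sub>R u')"
        using z by (intro sum.cong) auto
      also have "\<dots> = c u *\<^sub>R u" by (rule sum_single_coef[OF finU u])
      finally have "x - c u *\<^sub>R u \<in> W" using c(2) by simp
      then show "x \<in> cone_mod W {u}" unfolding cone1_iff using c(1) u by blast
    qed
  qed
  have inF: "cone_mod W {u} \<in> Fan" using uf_face[OF uf C(1) face] .
  have rg: "is_ray_gen W (cone_mod W {u}) u"
    unfolding is_ray_gen_def
  proof (intro conjI ballI)
    show "u \<in> Lam" "u \<notin> W" using gen_in_Lam_notW[OF g zb uB] by auto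
    show "cone_mod W {u} = cone_mod W {u}" ..
    fix x assume x: "x \<in> Lam \<inter> cone_mod W {u}"
    have "x \<in> cone_mod W {u}" using x by blast
    then obtain t where t: "t \<ge> 0" "x - t *\<^sub>R u \<in> W" unfolding cone1_iff by blast
    have "x - (\<Sum>u'\<in>{u}. (\<lambda>_. t) u' *\<^sub>R u') \<in> W" using t by simp
    moreover have "{u} \<subseteq> B" using uB by blast
    ultimately have "dualm W B u \<bullet> x = t" using coord[OF g zb, of "{u}" x "\<lambda>_. t" u] uB by simp
    then have "t \<in> \<int>" using Lam_inner_int[OF dualm(1)[OF g zb uB]] x by auto
    then obtain k where k: "t = of_int k" by (auto elim: Ints_cases)
    then have tk: "t = of_nat (nat k)" using t(1) by simp
    show "\<exists>k::nat. x - of_nat k *\<^sub>R u \<in> W" by (rule exI[of _ "nat k"]) (use t(2) tk in simp)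
  qed
  show "is_ray_gen W (cone_mod W {u}) u" by (rule rg)
  show "cone_mod W {u} \<in> rays W Fan" unfolding rays_def using inF rg by blast
qed

lemma ray_gen_spec:
  assumes "\<rho> \<in> rays W Fan"
  shows "is_ray_gen W \<rho> (ray_gen W \<rho>)"
  using assms unfolding rays_def ray_gen_def by (auto intro: someI)

lemma ray_gen_mod:
  assumes "subspace W" "is_ray_gen W \<rho> u"
  shows "ray_gen W \<rho> - u \<in> W"
proof -
  have "is_ray_gen W \<rho> (ray_gen W \<rho>)" unfolding ray_gen_def using assms(2) by (rule someI)
  then show ?thesis using ray_gen_unique assms by blast
qed


lemma PL_lin: "f \<in> PL W Fan \<Longrightarrow> C \<in> Fan \<Longrightarrow> \<exists>m\<in>dualL W. \<forall>x\<in>C. f x = m \<bullet> x"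
  unfolding PL_def by blast
lemma PL_out: "f \<in> PL W Fan \<Longrightarrow> x \<notin> supp Fan \<Longrightarrow> f x = 0"
  unfolding PL_def by blast

lemma gen_in_cone:
  assumes "subspace W" "finite U" "u \<in> U"
  shows "u \<in> cone_mod W U"
  using in_cone1_sub[OF assms self_cone1[OF assms(1)]] .

lemma PL_expand:
  assumes uf: "unimodular_fan W Fan" and f: "f \<in> PL W Fan" and C: "C \<in> Fan" "C = cone_mod W U"
    and UB: "U \<subseteq> B" and zb: "zbasis_mod W B" and x: "x \<in> C" "x - (\<Sum>u\<in>U. c u *\<^sub>R u) \<in> W"
  shows "f x = (\<Sum>u\<in>U. c u * f (ray_gen W (cone_mod W {u})))"
proof -
  have sub: "subspace W" using uf_sub[OF uf] .
  have finU: "finite U" using zb_fin[OF zb] UB finite_subset by blast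
  obtain m where m: "m \<in> dualL W" "\<forall>x\<in>C. f x = m \<bullet> x" using PL_lin[OF f C(1)] by blast
  have "f x = m \<bullet> (\<Sum>u\<in>U. c u *\<^sub>R u)" using m orth_mod[OF m(1) x(2)] x(1) by simp
  also have "\<dots> = (\<Sum>u\<in>U. c u * (m \<bullet> u))" by (simp add: inner_sum_right)
  also have "\<dots> = (\<Sum>u\<in>U. c u * f (ray_gen W (cone_mod W {u})))"
  proof (rule sum.cong[OF refl])
    fix u assume u: "u \<in> U"
    have rg: "is_ray_gen W (cone_mod W {u}) u" using ray_of_gen(2)[OF uf C UB zb u] .
    have d: "ray_gen W (cone_mod W {u}) - u \<in> W" using ray_gen_mod[OF sub rg] .
    have uC: "u \<in> C" using gen_in_cone[OF sub finU u] C(2) by simp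
    have rC: "ray_gen W (cone_mod W {u}) \<in> C"
      using cone_sat[OF sub, of u U] uC C(2) d sub
      by (metis minus_diff_eq subspace_neg)
    have "f (ray_gen W (cone_mod W {u})) = m \<bullet> ray_gen W (cone_mod W {u})" using m rC by blast
    also have "\<dots> = m \<bullet> u" using orth_mod[OF m(1) d] .
    finally show "c u * (m \<bullet> u) = c u * f (ray_gen W (cone_mod W {u}))" by simp
  qed
  finally show ?thesis .
qed

lemma PL_determined:
  assumes uf: "unimodular_fan W Fan" and f: "f \<in> PL W Fan" and h: "h \<in> PL W Fan"
    and eq: "\<forall>\<rho>\<in>rays W Fan. f (ray_gen W \<rho>) = h (ray_gen W \<rho>)"
  shows "f = h"
proof
  fix x
  show "f x = h x"
  proof (cases "x \<in> supp Fan")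
    case False then show ?thesis using PL_out f h by metis
  next
    case True
    then obtain C where C: "C \<in> Fan" "x \<in> C" unfolding supp_def by blast
    obtain U B where UB: "U \<subseteq> B" "zbasis_mod W B" "C = cone_mod W U" using uf_rep[OF uf C(1)] by blast
    obtain c where c: "x - (\<Sum>u\<in>U. c u *\<^sub>R u) \<in> W" using C(2) UB(3) unfolding cone_mod_def by blast
    have r: "u \<in> U \<Longrightarrow> cone_mod W {u} \<in> rays W Fan" for u using ray_of_gen(1)[OF uf C(1) UB(3,1,2)] by blast
    show ?thesis
      unfolding PL_expand[OF uf f C(1) UB(3,1,2) C(2) c] PL_expand[OF uf h C(1) UB(3,1,2) C(2) c]
      using eq r by (intro sum.cong) auto
  qed
qed

lemma rep_of_ray:
  assumes g: "good W" and r: "is_ray_gen W \<rho> gg" and R: "\<rho> = cone_mod W U" and UB: "U \<subseteq> B"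
    and zb: "zbasis_mod W B"
  shows "\<exists>u. U = {u} \<and> u - gg \<in> W"
proof -
  have sub: "subspace W" using g good_sub by blast
  have finU: "finite U" using zb_fin[OF zb] UB finite_subset by blast
  have gr: "gg \<in> \<rho>" using r self_cone1[OF sub] unfolding is_ray_gen_def by auto
  obtain c where c: "\<forall>u\<in>U. c u \<ge> 0" "gg - (\<Sum>u\<in>U. c u *\<^sub>R u) \<in> W"
    using gr R unfolding cone_mod_def by blast
  have gW: "gg \<notin> W" "gg \<in> Lam" using r unfolding is_ray_gen_def by auto
  have "\<exists>k::nat. u - of_nat k *\<^sub>R gg \<in> W" if u: "u \<in> U" for u
  proof -
    have "u \<in> \<rho>" using gen_in_cone[OF sub finU u] R by simp
    moreover have "u \<in> Lam" using zb_Lam[OF zb] UB u by blast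
    ultimately show ?thesis using r unfolding is_ray_gen_def by blast
  qed
  then obtain k where k: "\<And>u. u \<in> U \<Longrightarrow> u - of_nat (k u) *\<^sub>R gg \<in> W" by metis
  have uW: "u \<in> U \<Longrightarrow> u \<notin> W" for u using gen_in_Lam_notW[OF g zb] UB by blast
  have kpos: "k u \<noteq> 0" if "u \<in> U" for u
  proof
    assume "k u = 0"
    then have "u \<in> W" using k[OF that] by simp
    then show False using uW[OF that] by blast
  qed
  have ne: "U \<noteq> {}"
  proof
    assume "U = {}" then show False using c(2) gW by simp
  qed
  then obtain u where u: "u \<in> U" by blast
  have single: "U = {u}"
  proof (rule ccontr)
    assume "U \<noteq> {u}"
    then obtain u2 where u2: "u2 \<in> U" "u2 \<noteq> u" using u by blast
    have "of_nat (k u2) *\<^sub>R (u - of_nat (k u) *\<^sub>R gg) - of_nat (k u) *\<^sub>R (u2 - of_nat (k u2) *\<^sub>R gg) \<in> W"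
      by (rule subspace_diff[OF sub subspace_scale[OF sub k[OF u]] subspace_scale[OF sub k[OF u2(1)]]])
    moreover have "of_nat (k u2) *\<^sub>R (u - of_nat (k u) *\<^sub>R gg) - of_nat (k u) *\<^sub>R (u2 - of_nat (k u2) *\<^sub>R gg)
       = of_nat (k u2) *\<^sub>R u - of_nat (k u) *\<^sub>R u2"
      by (simp add: algebra_simps)
    ultimately have w: "of_nat (k u2) *\<^sub>R u - of_nat (k u) *\<^sub>R u2 \<in> W" by simp
    have "dualm W B u \<bullet> (of_nat (k u2) *\<^sub>R u - of_nat (k u) *\<^sub>R u2) = 0"
      using dualL_orth[OF dualm(1)[OF g zb] w] u UB by blast
    moreover have "dualm W B u \<bullet> (of_nat (k u2) *\<^sub>R u - of_nat (k u) *\<^sub>R u2) = of_nat (k u2)"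
      using dualm(2)[OF g zb] u u2 UB by (auto simp: inner_diff_right subset_iff)
    ultimately show False using kpos[OF u2(1)] by simp
  qed
  have cu: "dualm W B u \<bullet> gg = c u" using coord[OF g zb UB c(2)] u UB by auto
  have uB: "u \<in> B" using u UB by blast
  have "c u \<in> \<int>" using cu Lam_inner_int[OF dualm(1)[OF g zb uB] gW(2)] by simp
  then obtain i where i: "c u = of_int i" by (auto elim: Ints_cases)
  have gu: "gg - c u *\<^sub>R u \<in> W" using c(2) single by simp
  have "(gg - c u *\<^sub>R u) + c u *\<^sub>R (u - of_nat (k u) *\<^sub>R gg) \<in> W"
    by (rule subspace_add[OF sub gu subspace_scale[OF sub k[OF u]]])
  moreover have "(gg - c u *\<^sub>R u) + c u *\<^sub>R (u - of_nat (k u) *\<^sub>R gg) = (1 - c u * of_nat (k u)) *\<^sub>R gg"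
    by (simp add: algebra_simps)
  ultimately have "1 - c u * of_nat (k u) = 0" using scale_notin[OF sub _ gW(1)] by metis
  then have "i * int (k u) = 1" using i by (metis eq_iff_diff_eq_0 of_int_1 of_int_eq_iff of_int_mult of_int_of_nat_eq)
  then have "k u = 1" using zmult_eq_1_iff by fastforce
  then show ?thesis using single k[OF u] by auto
qed


lemma Ints_pos_ge1: "(x::real) \<in> \<int> \<Longrightarrow> x > 0 \<Longrightarrow> x \<ge> 1"
  by (auto elim!: Ints_cases)

lemma face_parts:
  assumes "face_mod W F C"
  obtains m where "\<forall>w\<in>W. m \<bullet> w = 0" "\<forall>x\<in>C. m \<bullet> x \<ge> 0" "F = C \<inter> {x. m \<bullet> x = 0}"
  using assms unfolding face_mod_def by blast

lemma sum_nonneg_zero_terms: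
  fixes f :: "'a \<Rightarrow> real"
  assumes "finite S" "\<forall>s\<in>S. f s \<ge> 0" "(\<Sum>s\<in>S. f s) = 0" "s \<in> S"
  shows "f s = 0"
  using assms sum_nonneg_eq_0_iff by blast

lemma cone_face_zero:
  assumes sub: "subspace W" and fin: "finite U" and C: "C = cone_mod W U"
    and m: "\<forall>w\<in>W. m \<bullet> w = 0" "\<forall>x\<in>C. m \<bullet> x \<ge> 0"
    and c: "\<forall>u\<in>U. c u \<ge> 0" "x - (\<Sum>u\<in>U. c u *\<^sub>R u) \<in> W" and mx: "m \<bullet> x = 0"
    and u: "u \<in> U" "c u \<noteq> 0"
  shows "m \<bullet> u = 0"
proof -
  have mu: "m \<bullet> u' \<ge> 0" if "u' \<in> U" for u' using m(2) gen_in_cone[OF sub fin that] C by blast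
  have "m \<bullet> (x - (\<Sum>u\<in>U. c u *\<^sub>R u)) = 0" using m(1) c(2) by blast
  then have "m \<bullet> x = m \<bullet> (\<Sum>u\<in>U. c u *\<^sub>R u)" by (simp add: inner_diff_right)
  then have "(\<Sum>u\<in>U. c u * (m \<bullet> u)) = 0" using mx by (simp add: inner_sum_right)
  then have "c u * (m \<bullet> u) = 0"
    using sum_nonneg_zero_terms[OF fin _ _ u(1), of "\<lambda>u. c u * (m \<bullet> u)"] c(1) mu by auto
  then show ?thesis using u(2) by simp
qed

lemma keyK:
  assumes uf: "unimodular_fan W Fan" and CF: "C \<in> Fan" "D \<in> Fan"
    and C: "C = cone_mod W U" "U \<subseteq> B" "zbasis_mod W B"
    and D: "D = cone_mod W V" "V \<subseteq> B'" "zbasis_mod W B'"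
    and v: "v \<in> V" "v \<in> C" "v \<in> D"
  shows "\<exists>u\<in>U. u - v \<in> W"
proof -
  have g: "good W" using uf_good[OF uf] .
  have sub: "subspace W" using uf_sub[OF uf] .
  have finU: "finite U" using zb_fin[OF C(3)] C(2) finite_subset by blast
  have finV: "finite V" using zb_fin[OF D(3)] D(2) finite_subset by blast
  obtain m where m: "\<forall>w\<in>W. m \<bullet> w = 0" "\<forall>x\<in>C. m \<bullet> x \<ge> 0" "C \<inter> D = C \<inter> {x. m \<bullet> x = 0}"
    using face_parts[OF uf_inter[OF uf CF]] by blast
  obtain a where a: "\<forall>u\<in>U. a u \<ge> 0" "v - (\<Sum>u\<in>U. a u *\<^sub>R u) \<in> W"
    using v(2) C(1) unfolding cone_mod_def by blast
  have mv: "m \<bullet> v = 0" using m(3) v by blast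
  have uD: "u \<in> D" if "u \<in> U" "a u \<noteq> 0" for u
  proof -
    have "m \<bullet> u = 0" using cone_face_zero[OF sub finU C(1) m(1,2) a mv that] .
    moreover have "u \<in> C" using gen_in_cone[OF sub finU that(1)] C(1) by simp
    ultimately show ?thesis using m(3) by blast
  qed
  have "\<forall>u\<in>U. \<exists>bu. a u \<noteq> 0 \<longrightarrow> (\<forall>v'\<in>V. bu v' \<ge> 0) \<and> u - (\<Sum>v'\<in>V. bu v' *\<^sub>R v') \<in> W"
    using uD D(1) unfolding cone_mod_def by blast
  then obtain b where b: "\<And>u. u \<in> U \<Longrightarrow> a u \<noteq> 0 \<Longrightarrow> (\<forall>v'\<in>V. b u v' \<ge> 0) \<and> u - (\<Sum>v'\<in>V. b u v' *\<^sub>R v') \<in> W"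
    by metis
  define b' where "b' u v' = (if a u = 0 then 0 else b u v')" for u v'
  have b'nn: "u \<in> U \<Longrightarrow> v' \<in> V \<Longrightarrow> b' u v' \<ge> 0" for u v' using b unfolding b'_def by auto
  have SW: "(\<Sum>u\<in>U. a u *\<^sub>R (u - (\<Sum>v'\<in>V. b' u v' *\<^sub>R v'))) \<in> W"
  proof (rule subspace_sum[OF sub])
    fix u assume u: "u \<in> U"
    show "a u *\<^sub>R (u - (\<Sum>v'\<in>V. b' u v' *\<^sub>R v')) \<in> W"
    proof (cases "a u = 0")
      case True then show ?thesis using subspace_0[OF sub] by simp
    next
      case False then show ?thesis using b[OF u False] subspace_scale[OF sub] unfolding b'_def by simp
    qed
  qed
  have Seq: "(\<Sum>u\<in>U. a u *\<^sub>R (u - (\<Sum>v'\<in>V. b' u v' *\<^sub>R v')))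
      = (\<Sum>u\<in>U. a u *\<^sub>R u) - (\<Sum>v'\<in>V. (\<Sum>u\<in>U. a u * b' u v') *\<^sub>R v')"
  proof -
    have "(\<Sum>u\<in>U. a u *\<^sub>R (u - (\<Sum>v'\<in>V. b' u v' *\<^sub>R v')))
        = (\<Sum>u\<in>U. a u *\<^sub>R u) - (\<Sum>u\<in>U. \<Sum>v'\<in>V. (a u * b' u v') *\<^sub>R v')"
      by (simp add: scaleR_diff_right sum_subtractf scaleR_sum_right)
    also have "(\<Sum>u\<in>U. \<Sum>v'\<in>V. (a u * b' u v') *\<^sub>R v') = (\<Sum>v'\<in>V. \<Sum>u\<in>U. (a u * b' u v') *\<^sub>R v')"
      by (rule sum.swap)
    also have "\<dots> = (\<Sum>v'\<in>V. (\<Sum>u\<in>U. a u * b' u v') *\<^sub>R v')" by (simp add: scaleR_sum_left)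
    finally show ?thesis .
  qed
  have "v - (\<Sum>v'\<in>V. (\<Sum>u\<in>U. a u * b' u v') *\<^sub>R v')
      = (v - (\<Sum>u\<in>U. a u *\<^sub>R u)) + (\<Sum>u\<in>U. a u *\<^sub>R (u - (\<Sum>v'\<in>V. b' u v' *\<^sub>R v')))"
    unfolding Seq by simp
  also have "\<dots> \<in> W" by (rule subspace_add[OF sub a(2) SW])
  finally have "v - (\<Sum>v'\<in>V. (\<Sum>u\<in>U. a u * b' u v') *\<^sub>R v') \<in> W" .
  note cv = coord[OF g D(3) D(2) this]
  have vB: "v \<in> B'" using v D(2) by blast
  have one: "(\<Sum>u\<in>U. a u * b' u v) = 1"
    using cv[OF vB] v(1) dualm(2)[OF g D(3) vB vB] by simp
  have zero: "(\<Sum>u\<in>U. a u * b' u v'') = 0" if "v'' \<in> V" "v'' \<noteq> v" for v''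
    using cv[of v''] that dualm(2)[OF g D(3), of v'' v] vB D(2) by auto
  have "\<exists>u0\<in>U. a u0 * b' u0 v \<noteq> 0"
  proof (rule ccontr)
    assume "\<not> ?thesis"
    then have "(\<Sum>u\<in>U. a u * b' u v) = 0" by (intro sum.neutral) blast
    then show False using one by simp
  qed
  then obtain u0 where u0: "u0 \<in> U" "a u0 * b' u0 v \<noteq> 0" by blast
  have au0: "a u0 \<noteq> 0" using u0 by auto
  have vanish: "b' u0 v'' = 0" if "v'' \<in> V" "v'' \<noteq> v" for v''
  proof -
    have "a u0 * b' u0 v'' = 0"
      using sum_nonneg_zero_terms[OF finU _ zero[OF that] u0(1)] a(1) b'nn[OF _ that(1)] by auto
    then show ?thesis using au0 by simp
  qed
  define \<beta> where "\<beta> = b' u0 v"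
  have bpos: "\<beta> > 0" using b'nn[OF u0(1) v(1)] u0(2) unfolding \<beta>_def by (cases "b' u0 v = 0") auto
  have "(\<Sum>v'\<in>V. b' u0 v' *\<^sub>R v') = (\<Sum>v'\<in>V. (if v' = v then \<beta> else 0) *\<^sub>R v')"
    using vanish unfolding \<beta>_def by (intro sum.cong) auto
  also have "\<dots> = \<beta> *\<^sub>R v" by (rule sum_single_coef[OF finV v(1)])
  finally have u0v: "u0 - \<beta> *\<^sub>R v \<in> W" using b[OF u0(1) au0] unfolding b'_def using au0 by simp
  have u0B: "u0 \<in> B" using u0 C(2) by blast
  have u0L: "u0 \<in> Lam" using zb_Lam[OF C(3)] u0B by blast
  have vL: "v \<in> Lam" using zb_Lam[OF D(3)] vB by blast
  have "dualm W B' v \<bullet> u0 = \<beta> * (dualm W B' v \<bullet> v)"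
    using orth_mod[OF dualm(1)[OF g D(3) vB] u0v] by simp
  then have b1: "dualm W B' v \<bullet> u0 = \<beta>" using dualm(2)[OF g D(3) vB vB] by simp
  have "\<beta> \<in> \<int>" using Lam_inner_int[OF dualm(1)[OF g D(3) vB] u0L] b1 by simp
  then have bge: "\<beta> \<ge> 1" using bpos Ints_pos_ge1 by blast
  have "dualm W B u0 \<bullet> u0 = \<beta> * (dualm W B u0 \<bullet> v)"
    using orth_mod[OF dualm(1)[OF g C(3) u0B] u0v] by simp
  then have g1: "\<beta> * (dualm W B u0 \<bullet> v) = 1" using dualm(2)[OF g C(3) u0B u0B] by simp
  have gi: "dualm W B u0 \<bullet> v \<in> \<int>" using Lam_inner_int[OF dualm(1)[OF g C(3) u0B] vL] .
  have gpos: "dualm W B u0 \<bullet> v > 0" using g1 bpos by (metis zero_less_mult_pos zero_less_one)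
  then have "dualm W B u0 \<bullet> v \<ge> 1" using gi Ints_pos_ge1 by blast
  then have "\<beta> * 1 \<le> \<beta> * (dualm W B u0 \<bullet> v)" using bpos by (intro mult_left_mono) auto
  then have "\<beta> = 1" using g1 bge by simp
  then show ?thesis using u0v u0(1) by auto
qed


definition rep :: "(real^'n) set \<Rightarrow> (real^'n) set \<Rightarrow> (real^'n) set \<times> (real^'n) set" where
  "rep W C = (SOME p. fst p \<subseteq> snd p \<and> zbasis_mod W (snd p) \<and> C = cone_mod W (fst p))"

lemma rep:
  assumes "unimodular_fan W Fan" "C \<in> Fan"
  shows "fst (rep W C) \<subseteq> snd (rep W C)" "zbasis_mod W (snd (rep W C))" "C = cone_mod W (fst (rep W C))"
proof -
  have "\<exists>p. fst p \<subseteq> snd p \<and> zbasis_mod W (snd p) \<and> C = cone_mod W (fst p)"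
    using uf_rep[OF assms] by auto
  then have "fst (rep W C) \<subseteq> snd (rep W C) \<and> zbasis_mod W (snd (rep W C)) \<and> C = cone_mod W (fst (rep W C))"
    unfolding rep_def by (rule someI_ex)
  then show "fst (rep W C) \<subseteq> snd (rep W C)" "zbasis_mod W (snd (rep W C))" "C = cone_mod W (fst (rep W C))"
    by auto
qed

lemma mod_trans_iff:
  assumes "subspace W" "a - b \<in> W"
  shows "a - c \<in> W \<longleftrightarrow> b - c \<in> W"
proof
  assume "a - c \<in> W"
  then have "(a - c) - (a - b) \<in> W" using subspace_diff assms by blast
  then show "b - c \<in> W" by simp
next
  assume "b - c \<in> W"
  then have "(a - b) + (b - c) \<in> W" using subspace_add assms by blast
  then show "a - c \<in> W" by simp
qed

definition MM :: "(real^'n) set \<Rightarrow> (real^'n) set \<Rightarrow> (real^'n) set \<Rightarrow> real^'n \<Rightarrow> real^'n" where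
  "MM W U B gg = (\<Sum>u\<in>{u\<in>U. u - gg \<in> W}. dualm W B u)"

lemma dualL_sum:
  assumes "finite S" "\<And>s. s \<in> S \<Longrightarrow> f s \<in> dualL W"
  shows "(\<Sum>s\<in>S. f s) \<in> dualL W"
  using assms unfolding dualL_def
  by (auto simp: sum_component inner_sum_left intro!: Ints_sum sum.neutral)

lemma MM_dual:
  assumes "good W" "zbasis_mod W B" "U \<subseteq> B"
  shows "MM W U B gg \<in> dualL W"
  unfolding MM_def
proof (rule dualL_sum)
  show "finite {u \<in> U. u - gg \<in> W}" using zb_fin[OF assms(2)] assms(3) finite_subset by fastforce
  fix s assume "s \<in> {u \<in> U. u - gg \<in> W}"
  then show "dualm W B s \<in> dualL W" using dualm(1)[OF assms(1,2)] assms(3) by blast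
qed

lemma MM_on:
  assumes "good W" "zbasis_mod W B" "U \<subseteq> B" "b \<in> B"
  shows "MM W U B gg \<bullet> b = (if b \<in> U \<and> b - gg \<in> W then 1 else 0)"
proof -
  have fin: "finite {u \<in> U. u - gg \<in> W}" using zb_fin[OF assms(2)] assms(3) finite_subset by fastforce
  have "MM W U B gg \<bullet> b = (\<Sum>u\<in>{u\<in>U. u - gg \<in> W}. if b = u then 1 else 0)"
    unfolding MM_def inner_sum_left using assms dualm(2)[OF assms(1,2)]
    by (intro sum.cong) auto
  also have "\<dots> = (if b \<in> U \<and> b - gg \<in> W then 1 else 0)"
    using fin by (simp add: sum.delta)
  finally show ?thesis .
qed

lemma glue:
  assumes uf: "unimodular_fan W Fan" and CF: "C \<in> Fan" "D \<in> Fan"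
    and C: "C = cone_mod W U" "U \<subseteq> B" "zbasis_mod W B"
    and D: "D = cone_mod W V" "V \<subseteq> B'" "zbasis_mod W B'"
    and x: "x \<in> C" "x \<in> D"
  shows "MM W U B gg \<bullet> x = MM W V B' gg \<bullet> x"
proof -
  have g: "good W" using uf_good[OF uf] .
  have sub: "subspace W" using uf_sub[OF uf] .
  have finV: "finite V" using zb_fin[OF D(3)] D(2) finite_subset by blast
  obtain m where m: "\<forall>w\<in>W. m \<bullet> w = 0" "\<forall>x\<in>D. m \<bullet> x \<ge> 0" "D \<inter> C = D \<inter> {x. m \<bullet> x = 0}"
    using face_parts[OF uf_inter[OF uf CF(2,1)]] by blast
  obtain d where d: "\<forall>v\<in>V. d v \<ge> 0" "x - (\<Sum>v\<in>V. d v *\<^sub>R v) \<in> W"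
    using x(2) D(1) unfolding cone_mod_def by blast
  have mx: "m \<bullet> x = 0" using m(3) x by blast
  have MCd: "MM W U B gg \<in> dualL W" using MM_dual[OF g C(3,2)] .
  have MDd: "MM W V B' gg \<in> dualL W" using MM_dual[OF g D(3,2)] .
  have e1: "MM W U B gg \<bullet> x = (\<Sum>v\<in>V. d v * (MM W U B gg \<bullet> v))"
    using orth_mod[OF MCd d(2)] by (simp add: inner_sum_right)
  have e2: "MM W V B' gg \<bullet> x = (\<Sum>v\<in>V. d v * (MM W V B' gg \<bullet> v))"
    using orth_mod[OF MDd d(2)] by (simp add: inner_sum_right)
  show ?thesis unfolding e1 e2
  proof (rule sum.cong[OF refl])
    fix v assume v: "v \<in> V"
    show "d v * (MM W U B gg \<bullet> v) = d v * (MM W V B' gg \<bullet> v)"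
    proof (cases "d v = 0")
      case True then show ?thesis by simp
    next
      case False
      have mv: "m \<bullet> v = 0" using cone_face_zero[OF sub finV D(1) m(1,2) d mx v False] .
      have vD: "v \<in> D" using gen_in_cone[OF sub finV v] D(1) by simp
      then have vC: "v \<in> C" using m(3) mv by blast
      obtain u0 where u0: "u0 \<in> U" "u0 - v \<in> W" using keyK[OF uf CF C D v vC vD] by blast
      have vB: "v \<in> B'" using v D(2) by blast
      have u0B: "u0 \<in> B" using u0 C(2) by blast
      have "MM W U B gg \<bullet> v = MM W U B gg \<bullet> u0"
        using orth_mod[OF MCd u0(2)] by simp
      also have "\<dots> = (if u0 - gg \<in> W then 1 else 0)" using MM_on[OF g C(3,2) u0B] u0 by simp
      also have "\<dots> = (if v - gg \<in> W then 1 else 0)"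
      proof -
        have "u0 - gg \<in> W \<longleftrightarrow> v - gg \<in> W"
          using mod_trans_iff[OF sub u0(2)] .
        then show ?thesis by simp
      qed
      also have "\<dots> = MM W V B' gg \<bullet> v" using MM_on[OF g D(3,2) vB] v by simp
      finally show ?thesis by simp
    qed
  qed
qed

definition cour :: "(real^'n) set \<Rightarrow> (real^'n) set set \<Rightarrow> (real^'n) set \<Rightarrow> real^'n \<Rightarrow> real" where
  "cour W Fan \<rho> x = (if x \<in> supp Fan then
      MM W (fst (rep W (SOME C. C \<in> Fan \<and> x \<in> C))) (snd (rep W (SOME C. C \<in> Fan \<and> x \<in> C))) (ray_gen W \<rho>) \<bullet> x
     else 0)"

lemma cour_on:
  assumes uf: "unimodular_fan W Fan" and D: "D \<in> Fan" "x \<in> D"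
  shows "cour W Fan \<rho> x = MM W (fst (rep W D)) (snd (rep W D)) (ray_gen W \<rho>) \<bullet> x"
proof -
  have xs: "x \<in> supp Fan" using D unfolding supp_def by blast
  define C where "C = (SOME C. C \<in> Fan \<and> x \<in> C)"
  have C: "C \<in> Fan \<and> x \<in> C" unfolding C_def by (rule someI[of _ D]) (use D in simp)
  have "cour W Fan \<rho> x = MM W (fst (rep W C)) (snd (rep W C)) (ray_gen W \<rho>) \<bullet> x"
    unfolding cour_def C_def using xs by simp
  also have "\<dots> = MM W (fst (rep W D)) (snd (rep W D)) (ray_gen W \<rho>) \<bullet> x"
  proof -
    have CF: "C \<in> Fan" "x \<in> C" using C by auto
    show ?thesis by (rule glue[OF uf CF(1) D(1) rep(3,1,2)[OF uf CF(1)] rep(3,1,2)[OF uf D(1)] CF(2) D(2)])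
  qed
  finally show ?thesis .
qed


lemma cour_PL:
  assumes uf: "unimodular_fan W Fan"
  shows "cour W Fan \<rho> \<in> PL W Fan"
  unfolding PL_def
proof (intro CollectI conjI allI impI ballI)
  fix x assume "x \<notin> supp Fan" then show "cour W Fan \<rho> x = 0" unfolding cour_def by simp
next
  fix D assume D: "D \<in> Fan"
  show "\<exists>m\<in>dualL W. \<forall>x\<in>D. cour W Fan \<rho> x = m \<bullet> x"
    using MM_dual[OF uf_good[OF uf] rep(2,1)[OF uf D]] cour_on[OF uf D] by blast
qed

lemma rays_Fan: "\<rho> \<in> rays W Fan \<Longrightarrow> \<rho> \<in> Fan" unfolding rays_def by blast

lemma rg_in: "subspace W \<Longrightarrow> is_ray_gen W \<rho> gg \<Longrightarrow> gg \<in> \<rho>"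
  using self_cone1 unfolding is_ray_gen_def by blast

lemma cour_gen_val:
  assumes uf: "unimodular_fan W Fan" and r: "\<rho> \<in> rays W Fan" "\<rho>' \<in> rays W Fan"
  shows "cour W Fan \<rho> (ray_gen W \<rho>') = (if \<rho>' = \<rho> then 1 else 0)"
proof -
  have g: "good W" using uf_good[OF uf] .
  have sub: "subspace W" using uf_sub[OF uf] .
  define gg where "gg = ray_gen W \<rho>"
  define g' where "g' = ray_gen W \<rho>'"
  have rgg: "is_ray_gen W \<rho> gg" unfolding gg_def by (rule ray_gen_spec[OF r(1)])
  have rg': "is_ray_gen W \<rho>' g'" unfolding g'_def by (rule ray_gen_spec[OF r(2)])
  have F': "\<rho>' \<in> Fan" using rays_Fan[OF r(2)] .
  obtain u' where u': "fst (rep W \<rho>') = {u'}" "u' - g' \<in> W"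
    using rep_of_ray[OF g rg' rep(3,1,2)[OF uf F']] by blast
  have u'B: "u' \<in> snd (rep W \<rho>')" using rep(1)[OF uf F'] u'(1) by blast
  have "cour W Fan \<rho> g' = MM W (fst (rep W \<rho>')) (snd (rep W \<rho>')) gg \<bullet> g'"
    using cour_on[OF uf F' rg_in[OF sub rg']] unfolding gg_def by simp
  also have "\<dots> = MM W (fst (rep W \<rho>')) (snd (rep W \<rho>')) gg \<bullet> u'"
    using orth_mod[OF MM_dual[OF g rep(2,1)[OF uf F']]] u'(2) sub
    by (metis minus_diff_eq subspace_neg)
  also have "\<dots> = (if u' - gg \<in> W then 1 else 0)"
    using MM_on[OF g rep(2,1)[OF uf F'] u'B] u'(1) by simp
  also have "\<dots> = (if \<rho>' = \<rho> then 1 else 0)"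
  proof -
    have "u' - gg \<in> W \<longleftrightarrow> g' - gg \<in> W" using mod_trans_iff[OF sub u'(2)] .
    also have "\<dots> \<longleftrightarrow> \<rho>' = \<rho>"
    proof
      assume "g' - gg \<in> W"
      then have "cone_mod W {g'} = cone_mod W {gg}" using cone1_cong[OF sub] by blast
      then show "\<rho>' = \<rho>" using rgg rg' unfolding is_ray_gen_def by simp
    next
      assume "\<rho>' = \<rho>"
      then show "g' - gg \<in> W" using ray_gen_unique[OF sub rg' ] rgg by simp
    qed
    finally show ?thesis by simp
  qed
  finally show ?thesis unfolding g'_def .
qed

lemma cour_zero:
  assumes uf: "unimodular_fan W Fan" and r: "\<rho> \<in> rays W Fan" and C: "C \<in> Fan" "\<not> \<rho> \<subseteq> C" "x \<in> C"
  shows "cour W Fan \<rho> x = 0"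
proof -
  have sub: "subspace W" using uf_sub[OF uf] .
  define gg where "gg = ray_gen W \<rho>"
  have rgg: "is_ray_gen W \<rho> gg" unfolding gg_def by (rule ray_gen_spec[OF r])
  have finU: "finite (fst (rep W C))"
    using zb_fin[OF rep(2)[OF uf C(1)]] rep(1)[OF uf C(1)] finite_subset by blast
  have "{u \<in> fst (rep W C). u - gg \<in> W} = {}"
  proof (rule ccontr)
    assume "{u \<in> fst (rep W C). u - gg \<in> W} \<noteq> {}"
    then obtain u where u: "u \<in> fst (rep W C)" "u - gg \<in> W" by blast
    have "\<rho> = cone_mod W {u}" using rgg cone1_cong[OF sub u(2)] unfolding is_ray_gen_def by simp
    then have "\<rho> \<subseteq> C" using in_cone1_sub[OF sub finU u(1)] rep(3)[OF uf C(1)] by auto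
    then show False using C(2) by blast
  qed
  then have "MM W (fst (rep W C)) (snd (rep W C)) gg = 0" unfolding MM_def by (simp only: sum.empty)
  then show ?thesis using cour_on[OF uf C(1) C(3), of \<rho>] unfolding gg_def by simp
qed

lemma courant_eq:
  assumes uf: "unimodular_fan W Fan" and r: "\<rho> \<in> rays W Fan"
  shows "courant W Fan \<rho> = cour W Fan \<rho>"
  unfolding courant_def
proof (rule the_equality)
  show "cour W Fan \<rho> \<in> PL W Fan \<and> cour W Fan \<rho> (ray_gen W \<rho>) = 1 \<and>
    (\<forall>\<rho>'\<in>rays W Fan. \<rho>' \<noteq> \<rho> \<longrightarrow> cour W Fan \<rho> (ray_gen W \<rho>') = 0)"
    using cour_PL[OF uf] cour_gen_val[OF uf r] r by auto
next
  fix f assume f: "f \<in> PL W Fan \<and> f (ray_gen W \<rho>) = 1 \<and> (\<forall>\<rho>'\<in>rays W Fan. \<rho>' \<noteq> \<rho> \<longrightarrow> f (ray_gen W \<rho>') = 0)"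
  show "f = cour W Fan \<rho>"
  proof (rule PL_determined[OF uf _ cour_PL[OF uf]])
    show "f \<in> PL W Fan" using f by blast
    show "\<forall>\<rho>'\<in>rays W Fan. f (ray_gen W \<rho>') = cour W Fan \<rho> (ray_gen W \<rho>')"
      using f cour_gen_val[OF uf r] by auto
  qed
qed


lemma exp_neg_lim: "(c::real) < 0 \<Longrightarrow> ((\<lambda>t. exp (t * c)) \<longlongrightarrow> 0) at_top"
  by real_asymp

lemma exp_indep_set:
  fixes a k :: "'i \<Rightarrow> real"
  assumes "finite I" "\<forall>t\<ge>0. (\<Sum>i\<in>I. a i * exp (t * k i)) = 0"
  shows "(\<Sum>i\<in>{i\<in>I. k i = c}. a i) = 0"
  using assms
proof (induction "card (k ` I)" arbitrary: I c rule: less_induct)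
  case less
  show ?case
  proof (cases "I = {}")
    case True then show ?thesis by simp
  next
    case False
    define km where "km = Max (k ` I)"
    have finK: "finite (k ` I)" using less.prems(1) by simp
    have kle: "i \<in> I \<Longrightarrow> k i \<le> km" for i unfolding km_def using finK by simp
    have kmI: "km \<in> k ` I" unfolding km_def using finK False by simp
    have lim: "((\<lambda>t. \<Sum>i\<in>I. a i * exp (t * (k i - km))) \<longlongrightarrow> (\<Sum>i\<in>I. if k i = km then a i else 0)) at_top"
    proof (rule tendsto_sum)
      fix i assume i: "i \<in> I"
      show "((\<lambda>t. a i * exp (t * (k i - km))) \<longlongrightarrow> (if k i = km then a i else 0)) at_top"
      proof (cases "k i = km")
        case True then show ?thesis by simp
      next
        case False
        then have "k i - km < 0" using kle[OF i] by simp
        from tendsto_mult[OF tendsto_const exp_neg_lim[OF this], of "a i"] False show ?thesis by simp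
      qed
    qed
    have ev: "eventually (\<lambda>t. (\<Sum>i\<in>I. a i * exp (t * (k i - km))) = 0) at_top"
    proof (rule eventually_mono[OF eventually_ge_at_top[of 0]])
      fix t :: real assume t: "t \<ge> 0"
      have "(\<Sum>i\<in>I. a i * exp (t * (k i - km))) = exp (- (t * km)) * (\<Sum>i\<in>I. a i * exp (t * k i))"
        by (simp add: sum_distrib_left right_diff_distrib exp_diff exp_minus field_simps)
      then show "(\<Sum>i\<in>I. a i * exp (t * (k i - km))) = 0" using less.prems(2) t by simp
    qed
    have "(\<Sum>i\<in>I. if k i = km then a i else 0) = 0"
      using tendsto_unique[OF _ lim tendsto_eventually[OF ev]] by simp
    then have top: "(\<Sum>i\<in>{i\<in>I. k i = km}. a i) = 0"
      using less.prems(1) by (simp add: sum.inter_filter)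
    define I' where "I' = {i\<in>I. k i \<noteq> km}"
    have finI': "finite I'" using less.prems(1) unfolding I'_def by simp
    have split: "(\<Sum>i\<in>I. f i) = (\<Sum>i\<in>{i\<in>I. k i = km}. f i) + (\<Sum>i\<in>I'. f i)" for f :: "'i \<Rightarrow> real"
    proof -
      have "I = {i\<in>I. k i = km} \<union> I'" "{i\<in>I. k i = km} \<inter> I' = {}" unfolding I'_def by auto
      then show ?thesis using less.prems(1) sum.union_disjoint[of "{i\<in>I. k i = km}" I' f]
        unfolding I'_def by (metis (no_types, lifting) finite_Un)
    qed
    have rest: "\<forall>t\<ge>0. (\<Sum>i\<in>I'. a i * exp (t * k i)) = 0"
    proof (intro allI impI)
      fix t :: real assume t: "t \<ge> 0"
      have "(\<Sum>i\<in>{i\<in>I. k i = km}. a i * exp (t * k i)) = (\<Sum>i\<in>{i\<in>I. k i = km}. a i) * exp (t * km)"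
        by (simp add: sum_distrib_right)
      then have "(\<Sum>i\<in>{i\<in>I. k i = km}. a i * exp (t * k i)) = 0" using top by simp
      then show "(\<Sum>i\<in>I'. a i * exp (t * k i)) = 0" using split[of "\<lambda>i. a i * exp (t * k i)"] less.prems(2) t by simp
    qed
    have "k ` I' \<subseteq> k ` I - {km}" unfolding I'_def by auto
    then have "card (k ` I') < card (k ` I)"
      using kmI finK by (meson card_Diff1_less card_mono finite_Diff le_less_trans)
    note IH = less.hyps[OF this finI' rest]
    show ?thesis
    proof (cases "c = km")
      case True then show ?thesis using top by simp
    next
      case False
      then have "{i\<in>I. k i = c} = {i\<in>I'. k i = c}" unfolding I'_def by auto
      then show ?thesis using IH by simp
    qed
  qed
qed


lemma sum_list_filter_if:
  "sum_list (map g (filter P xs)) = sum_list (map (\<lambda>x. if P x then g x else (0::'a::comm_monoid_add)) xs)"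
  by (induction xs) auto

lemma sum_list_nth: "sum_list (map g xs) = (\<Sum>i\<in>{..<length xs}. g (xs ! i))"
  by (simp add: sum_list_sum_nth atLeast0LessThan)

lemma exp_indep_list:
  fixes xs :: "(real \<times> real) list"
  assumes "\<forall>t\<ge>0. (\<Sum>p\<leftarrow>xs. fst p * exp (t * snd p)) = 0"
  shows "(\<Sum>p\<leftarrow>xs. if snd p = c then fst p else 0) = 0"
proof -
  have A: "\<forall>t\<ge>0. (\<Sum>i\<in>{..<length xs}. fst (xs!i) * exp (t * snd (xs!i))) = 0"
  proof (intro allI impI)
    fix t :: real assume "t \<ge> 0"
    then have "(\<Sum>p\<leftarrow>xs. fst p * exp (t * snd p)) = 0" using assms by blast
    then show "(\<Sum>i\<in>{..<length xs}. fst (xs!i) * exp (t * snd (xs!i))) = 0"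
      by (simp only: sum_list_nth)
  qed
  have "(\<Sum>i\<in>{i\<in>{..<length xs}. snd (xs!i) = c}. fst (xs!i)) = 0"
    by (rule exp_indep_set[where a = "\<lambda>i. fst (xs!i)" and k = "\<lambda>i. snd (xs!i)", OF finite_lessThan A])
  then have "(\<Sum>i\<in>{..<length xs}. if snd (xs!i) = c then fst (xs!i) else 0) = 0"
    by (simp only: sum.inter_filter[OF finite_lessThan])
  then show ?thesis by (simp only: sum_list_nth)
qed

lemma vec_rearr: "((y::'a::real_vector) - A) + t *\<^sub>R (u - E) = (y + t *\<^sub>R u) - (A + t *\<^sub>R E)"
  by (simp add: algebra_simps)

lemma cone_add_ray:
  assumes "subspace W" "y \<in> cone_mod W U" "u \<in> cone_mod W U" "t \<ge> 0"
  shows "y + t *\<^sub>R u \<in> cone_mod W U"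
proof -
  obtain c where c: "\<forall>u\<in>U. c u \<ge> 0" "y - (\<Sum>u\<in>U. c u *\<^sub>R u) \<in> W"
    using assms(2) unfolding cone_mod_def by blast
  obtain e where e: "\<forall>u\<in>U. e u \<ge> 0" "u - (\<Sum>u\<in>U. e u *\<^sub>R u) \<in> W"
    using assms(3) unfolding cone_mod_def by blast
  have w: "(y - (\<Sum>u\<in>U. c u *\<^sub>R u)) + t *\<^sub>R (u - (\<Sum>u\<in>U. e u *\<^sub>R u)) \<in> W"
    by (rule subspace_add[OF assms(1) c(2) subspace_scale[OF assms(1) e(2)]])
  have e1: "(\<Sum>u'\<in>U. (c u' + t * e u') *\<^sub>R u') = (\<Sum>u\<in>U. c u *\<^sub>R u) + (\<Sum>u\<in>U. (t * e u) *\<^sub>R u)"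
    by (simp only: scaleR_add_left sum.distrib)
  have e2: "(\<Sum>u\<in>U. (t * e u) *\<^sub>R u) = t *\<^sub>R (\<Sum>u\<in>U. e u *\<^sub>R u)"
    by (simp only: scaleR_sum_right scaleR_scaleR)
  have A: "(y + t *\<^sub>R u) - (\<Sum>u'\<in>U. (c u' + t * e u') *\<^sub>R u') \<in> W"
    using w unfolding e1 e2 vec_rearr .
  have B: "\<forall>u'\<in>U. c u' + t * e u' \<ge> 0" using c(1) e(1) assms(4) by (simp add: add_nonneg_nonneg)
  show ?thesis unfolding cone_mod_def
    by (rule CollectI, rule exI[of _ "\<lambda>u'. c u' + t * e u'"]) (use A B in simp)
qed

lemma PL_ray_lin:
  assumes uf: "unimodular_fan W Fan" and f: "f \<in> PL W Fan" and C: "C \<in> Fan" "y \<in> C" "u \<in> C" and t: "t \<ge> 0"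
  shows "y + t *\<^sub>R u \<in> C" "f (y + t *\<^sub>R u) = f y + t * f u"
proof -
  show yt: "y + t *\<^sub>R u \<in> C" using cone_add_ray[OF uf_sub[OF uf], of y "fst (rep W C)" u t] rep(3)[OF uf C(1)] C t by simp
  obtain m where m: "\<forall>x\<in>C. f x = m \<bullet> x" using PL_lin[OF f C(1)] by blast
  show "f (y + t *\<^sub>R u) = f y + t * f u" using m yt C by (simp add: inner_add_right)
qed

definition relsum :: "(real^'n) set set \<Rightarrow> (int \<times> (real^'n \<Rightarrow> real)) list \<Rightarrow> real^'n \<Rightarrow> real" where
  "relsum Fan \<kappa> x = (\<Sum>p\<leftarrow>\<kappa>. of_int (fst p) * expPL Fan (snd p) x)"

definition chisum :: "((real^'n \<Rightarrow> real) \<Rightarrow> int) \<Rightarrow> (int \<times> (real^'n \<Rightarrow> real)) list \<Rightarrow> int" where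
  "chisum chi \<kappa> = (\<Sum>p\<leftarrow>\<kappa>. fst p * chi (snd p))"

lemma group_vanish:
  assumes uf: "unimodular_fan W Fan" and r: "\<rho> \<in> rays W Fan"
    and PLk: "\<forall>p\<in>set \<kappa>. snd p \<in> PL W Fan" and rel: "\<forall>x. relsum Fan \<kappa> x = 0"
    and C: "C \<in> Fan" "\<rho> \<subseteq> C" "y \<in> C"
  shows "(\<Sum>p\<leftarrow>\<kappa>. if snd p (ray_gen W \<rho>) = k then of_int (fst p) * exp (snd p y) else 0) = 0"
proof -
  define u where "u = ray_gen W \<rho>"
  have uC: "u \<in> C" using rg_in[OF uf_sub[OF uf] ray_gen_spec[OF r]] C(2) unfolding u_def by blast
  have "\<forall>t\<ge>0. (\<Sum>q\<leftarrow>map (\<lambda>p. (of_int (fst p) * exp (snd p y), snd p u)) \<kappa>. fst q * exp (t * snd q)) = 0"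
  proof (intro allI impI)
    fix t :: real assume t: "t \<ge> 0"
    have "y + t *\<^sub>R u \<in> C"
      using cone_add_ray[OF uf_sub[OF uf], of y "fst (rep W C)" u t] rep(3)[OF uf C(1)] C uC t by simp
    then have ins: "y + t *\<^sub>R u \<in> supp Fan" using C(1) unfolding supp_def by blast
    have "0 = relsum Fan \<kappa> (y + t *\<^sub>R u)" using rel by simp
    also have "\<dots> = (\<Sum>p\<leftarrow>\<kappa>. of_int (fst p) * exp (snd p y) * exp (t * snd p u))"
      unfolding relsum_def
    proof (rule arg_cong[where f = sum_list], rule map_cong[OF refl])
      fix p assume p: "p \<in> set \<kappa>"
      have "snd p (y + t *\<^sub>R u) = snd p y + t * snd p u" using PL_ray_lin(2)[OF uf _ C(1,3) uC t] PLk p by blast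
      then show "of_int (fst p) * expPL Fan (snd p) (y + t *\<^sub>R u) = of_int (fst p) * exp (snd p y) * exp (t * snd p u)"
        using ins unfolding expPL_def by (simp add: exp_add)
    qed
    finally show "(\<Sum>q\<leftarrow>map (\<lambda>p. (of_int (fst p) * exp (snd p y), snd p u)) \<kappa>. fst q * exp (t * snd q)) = 0"
      by (simp add: o_def)
  qed
  from exp_indep_list[OF this, of k]
  have "(\<Sum>q\<leftarrow>map (\<lambda>p. (of_int (fst p) * exp (snd p y), snd p u)) \<kappa>. if snd q = k then fst q else 0) = 0" .
  moreover have "(\<Sum>q\<leftarrow>map (\<lambda>p. (of_int (fst p) * exp (snd p y), snd p u)) \<kappa>. if snd q = k then fst q else 0)
     = (\<Sum>p\<leftarrow>\<kappa>. if snd p u = k then of_int (fst p) * exp (snd p y) else 0)"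
    by (simp only: map_map o_def prod.sel)
  ultimately show ?thesis unfolding u_def by simp
qed


definition ystar :: "(real^'n) set \<Rightarrow> (real^'n) set set \<Rightarrow> (real^'n) set \<Rightarrow> real^'n \<Rightarrow> real^'n" where
  "ystar W Fan \<rho> x = (SOME y. (\<exists>C\<in>Fan. \<rho> \<subseteq> C \<and> y \<in> C) \<and> x - y \<in> star_space W \<rho>)"

definition mof :: "(real^'n) set \<Rightarrow> (real^'n) set \<Rightarrow> (real^'n \<Rightarrow> real) \<Rightarrow> real^'n" where
  "mof W \<rho> f = (SOME m. m \<in> dualL W \<and> (\<forall>x\<in>\<rho>. f x = m \<bullet> x))"

lemma star_fun_alt:
  "star_fun W Fan \<rho> f = (\<lambda>x. if x \<in> supp (star_fan W Fan \<rho>) then f (ystar W Fan \<rho> x) - mof W \<rho> f \<bullet> ystar W Fan \<rho> x else 0)"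
  unfolding star_fun_def ystar_def mof_def Let_def by simp

lemma subspace_star: "subspace (star_space W \<rho>)" unfolding star_space_def by simp

lemma W_sub_star: "W \<subseteq> star_space W \<rho>" unfolding star_space_def by (auto intro: span_base)

lemma u_in_star: "ray_gen W \<rho> \<in> star_space W \<rho>" unfolding star_space_def by (auto intro: span_base)

lemma star_supp_witness:
  assumes "x \<in> supp (star_fan W Fan \<rho>)"
  shows "\<exists>t. (\<exists>C\<in>Fan. \<rho> \<subseteq> C \<and> t \<in> C) \<and> x - t \<in> star_space W \<rho>"
proof -
  obtain D where D: "D \<in> star_fan W Fan \<rho>" "x \<in> D" using assms unfolding supp_def by blast
  then obtain \<tau> C where tC: "C \<in> Fan" "\<rho> \<subseteq> C" "face_mod W \<tau> C"
    "D = {x + w | x w. x \<in> \<tau> \<and> w \<in> star_space W \<rho>}"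
    unfolding star_fan_def by blast
  then obtain t s where ts: "x = t + s" "t \<in> \<tau>" "s \<in> star_space W \<rho>" using D(2) by blast
  have "t \<in> C" using tC(3) ts(2) unfolding face_mod_def by blast
  then show ?thesis using ts tC by (intro exI[of _ t]) auto
qed

lemma ystar_spec:
  assumes "x \<in> supp (star_fan W Fan \<rho>)"
  shows "\<exists>C\<in>Fan. \<rho> \<subseteq> C \<and> ystar W Fan \<rho> x \<in> C" "x - ystar W Fan \<rho> x \<in> star_space W \<rho>"
proof -
  have "(\<exists>C\<in>Fan. \<rho> \<subseteq> C \<and> ystar W Fan \<rho> x \<in> C) \<and> x - ystar W Fan \<rho> x \<in> star_space W \<rho>"
    unfolding ystar_def using star_supp_witness[OF assms] by (rule someI_ex)
  then show "\<exists>C\<in>Fan. \<rho> \<subseteq> C \<and> ystar W Fan \<rho> x \<in> C" "x - ystar W Fan \<rho> x \<in> star_space W \<rho>" by auto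
qed

lemma mof_spec:
  assumes "f \<in> PL W Fan" "\<rho> \<in> Fan"
  shows "mof W \<rho> f \<in> dualL W" "\<forall>x\<in>\<rho>. f x = mof W \<rho> f \<bullet> x"
proof -
  have "\<exists>m. m \<in> dualL W \<and> (\<forall>x\<in>\<rho>. f x = m \<bullet> x)" using PL_lin[OF assms] by blast
  then have "mof W \<rho> f \<in> dualL W \<and> (\<forall>x\<in>\<rho>. f x = mof W \<rho> f \<bullet> x)"
    unfolding mof_def by (rule someI_ex)
  then show "mof W \<rho> f \<in> dualL W" "\<forall>x\<in>\<rho>. f x = mof W \<rho> f \<bullet> x" by auto
qed

lemma dualL_star:
  assumes "m \<in> dualL W" "m \<bullet> ray_gen W \<rho> = 0"
  shows "m \<in> dualL (star_space W \<rho>)"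
proof -
  have "\<forall>w\<in>insert (ray_gen W \<rho>) W. m \<bullet> w = 0" using assms dualL_orth by auto
  then have "\<forall>w\<in>star_space W \<rho>. m \<bullet> w = 0" unfolding star_space_def using ortho_span by blast
  then show ?thesis using assms(1) unfolding dualL_def by blast
qed

lemma dualL_diff: "a \<in> dualL W \<Longrightarrow> b \<in> dualL W \<Longrightarrow> a - b \<in> dualL W"
  unfolding dualL_def by (auto simp: inner_diff_left)

lemma transport:
  assumes uf: "unimodular_fan W Fan" and r: "\<rho> \<in> rays W Fan" and f: "f \<in> PL W Fan"
    and C: "C \<in> Fan" "\<rho> \<subseteq> C" "t \<in> C" and C': "C' \<in> Fan" "\<rho> \<subseteq> C'" "y \<in> C'"
    and ty: "y - t \<in> star_space W \<rho>" and m0: "m0 \<in> dualL W" "m0 \<bullet> ray_gen W \<rho> = f (ray_gen W \<rho>)"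
  shows "f y - m0 \<bullet> y = f t - m0 \<bullet> t"
proof -
  have sub: "subspace W" using uf_sub[OF uf] .
  define u where "u = ray_gen W \<rho>"
  have uR: "u \<in> \<rho>" using rg_in[OF sub ray_gen_spec[OF r]] unfolding u_def .
  have uC: "u \<in> C" "u \<in> C'" using uR C(2) C'(2) by auto
  obtain r0 where r0: "(y - t) - r0 *\<^sub>R u \<in> W"
    using ty unfolding star_space_def u_def span_breakdown_eq span_eq_iff[THEN iffD2, OF sub] by blast
  define L where "L = max 0 r0"
  have L: "L \<ge> 0" "L - r0 \<ge> 0" unfolding L_def by auto
  define p where "p = t + L *\<^sub>R u"
  define q where "q = y + (L - r0) *\<^sub>R u"
  have pC: "p \<in> C" unfolding p_def using PL_ray_lin(1)[OF uf f C(1,3) uC(1) L(1)] .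
  have qC': "q \<in> C'" unfolding q_def using PL_ray_lin(1)[OF uf f C'(1,3) uC(2) L(2)] .
  have "q - p = (y - t) - r0 *\<^sub>R u" unfolding p_def q_def by (simp add: algebra_simps)
  then have qp: "q - p \<in> W" using r0 by simp
  have pC': "p \<in> C'" using cone_sat[OF sub, of q "fst (rep W C')" p] qC' qp rep(3)[OF uf C'(1)] by simp
  obtain mC' where mC': "mC' \<in> dualL W" "\<forall>x\<in>C'. f x = mC' \<bullet> x" using PL_lin[OF f C'(1)] by blast
  have fpq: "f p = f q" using mC' pC' qC' orth_mod[OF mC'(1) qp] by simp
  have m0pq: "m0 \<bullet> p = m0 \<bullet> q" using orth_mod[OF m0(1) qp] by simp
  have fp: "f p = f t + L * f u" unfolding p_def using PL_ray_lin(2)[OF uf f C(1,3) uC(1) L(1)] .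
  have fq: "f q = f y + (L - r0) * f u" unfolding q_def using PL_ray_lin(2)[OF uf f C'(1,3) uC(2) L(2)] .
  have mp: "m0 \<bullet> p = m0 \<bullet> t + L * f u" unfolding p_def using m0(2) by (simp add: inner_add_right u_def)
  have mq: "m0 \<bullet> q = m0 \<bullet> y + (L - r0) * f u" unfolding q_def using m0(2) by (simp add: inner_add_right u_def)
  show ?thesis using fpq m0pq fp fq mp mq by (simp add: algebra_simps)
qed


lemma star_cancel:
  fixes W :: "(real^'n) set"
  assumes uf: "unimodular_fan W Fan" and r: "\<rho> \<in> rays W Fan"
    and inv: "\<forall>f\<in>PL (star_space W \<rho>) (star_fan W Fan \<rho>). \<forall>l\<in>L (star_space W \<rho>) (star_fan W Fan \<rho>).
               chiR (\<lambda>x. f x + l x) = chiR f"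
    and IH: "\<forall>\<kappa>. (\<forall>p\<in>set \<kappa>. snd p \<in> PL (star_space W \<rho>) (star_fan W Fan \<rho>)) \<longrightarrow>
               (\<forall>x. relsum (star_fan W Fan \<rho>) \<kappa> x = 0) \<longrightarrow> chisum chiR \<kappa> = 0"
    and G: "\<forall>p\<in>set G. snd p \<in> PL W Fan \<and> snd p (ray_gen W \<rho>) = k"
    and relG: "\<forall>C\<in>Fan. \<rho> \<subseteq> C \<longrightarrow> (\<forall>y\<in>C. (\<Sum>p\<leftarrow>G. of_int (fst p) * exp (snd p y)) = 0)"
  shows "(\<Sum>p\<leftarrow>G. fst p * chiR (star_fun W Fan \<rho> (snd p))) = 0"
proof (cases "G = []")
  case True then show ?thesis by simp
next
  case False
  have sub: "subspace W" using uf_sub[OF uf] .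
  define S where "S = star_space W \<rho>"
  define SF where "SF = star_fan W Fan \<rho>"
  define u where "u = ray_gen W \<rho>"
  have rF: "\<rho> \<in> Fan" using rays_Fan[OF r] .
  have uR: "u \<in> \<rho>" using rg_in[OF sub ray_gen_spec[OF r]] unfolding u_def .
  define f0 where "f0 = snd (hd G)"
  have f0: "f0 \<in> PL W Fan" "f0 u = k" using G False unfolding f0_def u_def by auto
  define m0 where "m0 = mof W \<rho> f0"
  have m0: "m0 \<in> dualL W" "m0 \<bullet> u = k" using mof_spec[OF f0(1) rF] uR f0(2) unfolding m0_def by auto
  define hh where "hh f = (\<lambda>x. if x \<in> supp SF then f (ystar W Fan \<rho> x) - m0 \<bullet> ystar W Fan \<rho> x else 0)"
    for f :: "real^'n \<Rightarrow> real"
  have hhPL: "hh f \<in> PL S SF" if f: "f \<in> PL W Fan" "f u = k" for f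
    unfolding PL_def
  proof (intro CollectI conjI allI impI ballI)
    fix x assume "x \<notin> supp SF" then show "hh f x = 0" unfolding hh_def by simp
  next
    fix D assume D: "D \<in> SF"
    then obtain \<tau> C where tC: "C \<in> Fan" "\<rho> \<subseteq> C" "face_mod W \<tau> C"
      "D = {x + w | x w. x \<in> \<tau> \<and> w \<in> S}"
      unfolding star_fan_def SF_def S_def by blast
    obtain mC where mC: "mC \<in> dualL W" "\<forall>x\<in>C. f x = mC \<bullet> x" using PL_lin[OF f(1) tC(1)] by blast
    have uC: "u \<in> C" using uR tC(2) by blast
    have m'd: "mC - m0 \<in> dualL S"
      unfolding S_def by (rule dualL_star[OF dualL_diff[OF mC(1) m0(1)]])
        (use mC uC f(2) m0(2) in \<open>simp add: inner_diff_left u_def\<close>)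
    show "\<exists>m\<in>dualL S. \<forall>x\<in>D. hh f x = m \<bullet> x"
    proof (intro bexI[OF _ m'd] ballI)
      fix x assume xD: "x \<in> D"
      then obtain t s where ts: "x = t + s" "t \<in> \<tau>" "s \<in> S" using tC(4) by blast
      have tC': "t \<in> C" using tC(3) ts(2) unfolding face_mod_def by blast
      have xs: "x \<in> supp SF" using D xD unfolding supp_def by blast
      obtain C' where C': "C' \<in> Fan" "\<rho> \<subseteq> C'" "ystar W Fan \<rho> x \<in> C'"
        using ystar_spec(1)[OF xs[unfolded SF_def]] by blast
      have xy: "x - ystar W Fan \<rho> x \<in> S" using ystar_spec(2)[OF xs[unfolded SF_def]] unfolding S_def .
      have "ystar W Fan \<rho> x - t = s - (x - ystar W Fan \<rho> x)" using ts(1) by simp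
      then have yt: "ystar W Fan \<rho> x - t \<in> S" using subspace_diff[OF _ ts(3) xy] subspace_star unfolding S_def by metis
      have "hh f x = f (ystar W Fan \<rho> x) - m0 \<bullet> ystar W Fan \<rho> x" unfolding hh_def using xs by simp
      also have "\<dots> = f t - m0 \<bullet> t"
        by (rule transport[OF uf r f(1) tC(1,2) tC' C' yt[unfolded S_def]]) (use m0 f(2) u_def in auto)
      also have "\<dots> = (mC - m0) \<bullet> t" using mC tC' by (simp add: inner_diff_left)
      also have "\<dots> = (mC - m0) \<bullet> x" using dualL_orth[OF m'd ts(3)] ts(1) by (simp add: inner_add_right)
      finally show "hh f x = (mC - m0) \<bullet> x" .
    qed
  qed
  have sfeq: "chiR (star_fun W Fan \<rho> f) = chiR (hh f)" if f: "f \<in> PL W Fan" "f u = k" for f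
  proof -
    define mf where "mf = mof W \<rho> f"
    have mf: "mf \<in> dualL W" "mf \<bullet> u = k" using mof_spec[OF f(1) rF] uR f(2) unfolding mf_def by auto
    have md: "m0 - mf \<in> dualL S"
      unfolding S_def by (rule dualL_star[OF dualL_diff[OF m0(1) mf(1)]])
        (use m0 mf in \<open>simp add: inner_diff_left u_def\<close>)
    define l where "l = (\<lambda>x. if x \<in> supp SF then (m0 - mf) \<bullet> x else 0)"
    have lL: "l \<in> L S SF" unfolding L_def l_def using md by blast
    have "star_fun W Fan \<rho> f = (\<lambda>x. hh f x + l x)"
    proof
      fix x show "star_fun W Fan \<rho> f x = hh f x + l x"
      proof (cases "x \<in> supp SF")
        case False then show ?thesis unfolding star_fun_alt hh_def l_def SF_def by simp
      next
        case True
        have xy: "x - ystar W Fan \<rho> x \<in> S" using ystar_spec(2)[OF True[unfolded SF_def]] unfolding S_def .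
        have "(m0 - mf) \<bullet> x = (m0 - mf) \<bullet> ystar W Fan \<rho> x" using orth_mod[OF md xy] .
        then show ?thesis using True unfolding star_fun_alt hh_def l_def SF_def mf_def
          by (simp add: inner_diff_left)
      qed
    qed
    then show ?thesis using inv hhPL[OF f] lL unfolding S_def SF_def by simp
  qed
  define \<kappa> where "\<kappa> = map (\<lambda>p. (fst p, hh (snd p))) G"
  have PLk: "\<forall>p\<in>set \<kappa>. snd p \<in> PL S SF" unfolding \<kappa>_def using hhPL G u_def by auto
  have relk: "\<forall>x. relsum SF \<kappa> x = 0"
  proof
    fix x show "relsum SF \<kappa> x = 0"
    proof (cases "x \<in> supp SF")
      case False then show ?thesis unfolding relsum_def \<kappa>_def expPL_def by (simp add: o_def)
    next
      case True
      obtain C' where C': "C' \<in> Fan" "\<rho> \<subseteq> C'" "ystar W Fan \<rho> x \<in> C'"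
        using ystar_spec(1)[OF True[unfolded SF_def]] by blast
      define y where "y = ystar W Fan \<rho> x"
      have "relsum SF \<kappa> x = (\<Sum>p\<leftarrow>G. of_int (fst p) * exp (snd p y) * exp (- (m0 \<bullet> y)))"
        unfolding relsum_def \<kappa>_def expPL_def hh_def y_def using True
        by (simp add: o_def exp_diff exp_minus field_simps)
      also have "\<dots> = (\<Sum>p\<leftarrow>G. of_int (fst p) * exp (snd p y)) * exp (- (m0 \<bullet> y))"
        by (simp add: sum_list_mult_const)
      also have "\<dots> = 0" using relG C' unfolding y_def by simp
      finally show ?thesis .
    qed
  qed
  have "chisum chiR \<kappa> = 0" using IH PLk relk unfolding S_def SF_def by blast
  moreover have "chisum chiR \<kappa> = (\<Sum>p\<leftarrow>G. fst p * chiR (star_fun W Fan \<rho> (snd p)))"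
    unfolding chisum_def \<kappa>_def using sfeq G u_def
    by (simp add: o_def) (rule arg_cong[where f = sum_list], rule map_cong, auto)
  ultimately show ?thesis by simp
qed


lemma PL_add_int:
  assumes "f \<in> PL W Fan" "g \<in> PL W Fan"
  shows "(\<lambda>x. f x + of_int e * g x) \<in> PL W Fan"
  unfolding PL_def
proof (intro CollectI conjI allI impI ballI)
  fix x assume "x \<notin> supp Fan" then show "f x + of_int e * g x = 0" using PL_out[OF assms(1)] PL_out[OF assms(2)] by simp
next
  fix C assume C: "C \<in> Fan"
  obtain m where m: "m \<in> dualL W" "\<forall>x\<in>C. f x = m \<bullet> x" using PL_lin[OF assms(1) C] by blast
  obtain m' where m': "m' \<in> dualL W" "\<forall>x\<in>C. g x = m' \<bullet> x" using PL_lin[OF assms(2) C] by blast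
  have "m + of_int e *\<^sub>R m' \<in> dualL W" using m(1) m'(1) unfolding dualL_def
    by (auto simp: inner_add_left)
  moreover have "\<forall>x\<in>C. f x + of_int e * g x = (m + of_int e *\<^sub>R m') \<bullet> x" using m m' by (simp add: inner_add_left)
  ultimately show "\<exists>m\<in>dualL W. \<forall>x\<in>C. f x + of_int e * g x = m \<bullet> x" by blast
qed

lemma sum_list_if_split:
  "(\<Sum>q\<leftarrow>xs. if P q then a q else b q) = (\<Sum>q\<leftarrow>xs. b q) + (\<Sum>q\<leftarrow>xs. if P q then a q - b q else (0::'a::ab_group_add))"
  by (induction xs) auto

lemma sum_list_zero: "(\<And>q. q \<in> set xs \<Longrightarrow> g q = 0) \<Longrightarrow> sum_list (map g xs) = (0::'a::monoid_add)"
  by (induction xs) auto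

lemma sum_list_neg: "(\<Sum>q\<leftarrow>xs. - g q) = - (\<Sum>q\<leftarrow>xs. g q :: 'a::ab_group_add)"
  by (induction xs) auto

definition mv :: "(real^'n) set \<Rightarrow> (real^'n) set set \<Rightarrow> (real^'n) set \<Rightarrow> real \<Rightarrow> int \<Rightarrow>
    (int \<times> (real^'n \<Rightarrow> real)) list \<Rightarrow> (int \<times> (real^'n \<Rightarrow> real)) list" where
  "mv W Fan \<rho> k e \<kappa> = map (\<lambda>q. if snd q (ray_gen W \<rho>) = k
      then (fst q, \<lambda>x. snd q x + of_int e * courant W Fan \<rho> x) else q) \<kappa>"

lemma mv_PL:
  assumes uf: "unimodular_fan W Fan" and r: "\<rho> \<in> rays W Fan" and PLk: "\<forall>p\<in>set \<kappa>. snd p \<in> PL W Fan"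
  shows "\<forall>p\<in>set (mv W Fan \<rho> k e \<kappa>). snd p \<in> PL W Fan"
  using PLk PL_add_int[OF _ cour_PL[OF uf]] courant_eq[OF uf r] unfolding mv_def by auto

lemma mv_rel:
  assumes uf: "unimodular_fan W Fan" and r: "\<rho> \<in> rays W Fan" and PLk: "\<forall>p\<in>set \<kappa>. snd p \<in> PL W Fan"
    and rel: "\<forall>x. relsum Fan \<kappa> x = 0"
  shows "\<forall>x. relsum Fan (mv W Fan \<rho> k e \<kappa>) x = 0"
proof
  fix x
  define \<delta> where "\<delta> = courant W Fan \<rho>"
  define u where "u = ray_gen W \<rho>"
  have "relsum Fan (mv W Fan \<rho> k e \<kappa>) x =
     (\<Sum>q\<leftarrow>\<kappa>. if snd q u = k then of_int (fst q) * expPL Fan (\<lambda>x. snd q x + of_int e * \<delta> x) x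
       else of_int (fst q) * expPL Fan (snd q) x)"
    unfolding relsum_def mv_def map_map
    by (rule arg_cong[where f=sum_list], rule map_cong) (auto simp: \<delta>_def u_def)
  also have "\<dots> = relsum Fan \<kappa> x + (\<Sum>q\<leftarrow>\<kappa>. if snd q u = k then
        of_int (fst q) * expPL Fan (\<lambda>x. snd q x + of_int e * \<delta> x) x - of_int (fst q) * expPL Fan (snd q) x else 0)"
    unfolding relsum_def by (rule sum_list_if_split)
  also have "(\<Sum>q\<leftarrow>\<kappa>. if snd q u = k then
        of_int (fst q) * expPL Fan (\<lambda>x. snd q x + of_int e * \<delta> x) x - of_int (fst q) * expPL Fan (snd q) x else 0) = 0"
  proof (cases "x \<in> supp Fan")
    case False
    have z: "\<And>f. expPL Fan f x = 0" unfolding expPL_def using False by simp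
    show ?thesis by (rule sum_list_zero) (simp add: z)
  next
    case True
    then obtain C where C: "C \<in> Fan" "x \<in> C" unfolding supp_def by blast
    show ?thesis
    proof (cases "\<rho> \<subseteq> C")
      case True
      have "(\<Sum>q\<leftarrow>\<kappa>. if snd q u = k then
          of_int (fst q) * expPL Fan (\<lambda>x. snd q x + of_int e * \<delta> x) x - of_int (fst q) * expPL Fan (snd q) x else 0)
        = (\<Sum>q\<leftarrow>\<kappa>. (exp (of_int e * \<delta> x) - 1) * (if snd q u = k then of_int (fst q) * exp (snd q x) else 0))"
        using \<open>x \<in> supp Fan\<close> unfolding expPL_def
        by (intro arg_cong[where f=sum_list] map_cong[OF refl]) (simp add: exp_add algebra_simps)
      also have "\<dots> = (exp (of_int e * \<delta> x) - 1) * (\<Sum>q\<leftarrow>\<kappa>. if snd q u = k then of_int (fst q) * exp (snd q x) else 0)"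
        by (simp add: sum_list_const_mult)
      also have "\<dots> = 0" using group_vanish[OF uf r PLk rel C(1) True C(2)] unfolding u_def by simp
      finally show ?thesis .
    next
      case False
      have d0: "\<delta> x = 0" unfolding \<delta>_def courant_eq[OF uf r] using cour_zero[OF uf r C(1) False C(2)] .
      show ?thesis by (rule sum_list_zero) (simp add: expPL_def d0)
    qed
  qed
  finally show "relsum Fan (mv W Fan \<rho> k e \<kappa>) x = 0" using rel by simp
qed


lemma group_vanish_filter:
  assumes uf: "unimodular_fan W Fan" and r: "\<rho> \<in> rays W Fan"
    and PLk: "\<forall>p\<in>set \<kappa>. snd p \<in> PL W Fan" and rel: "\<forall>x. relsum Fan \<kappa> x = 0"
  shows "\<forall>C\<in>Fan. \<rho> \<subseteq> C \<longrightarrow> (\<forall>y\<in>C.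
     (\<Sum>p\<leftarrow>filter (\<lambda>q. snd q (ray_gen W \<rho>) = k) \<kappa>. of_int (fst p) * exp (snd p y)) = 0)"
  using group_vanish[OF uf r PLk rel] by (simp add: sum_list_filter_if)

lemma mv_chi:
  fixes W :: "(real^'n) set"
  assumes uf: "unimodular_fan W Fan" and r: "\<rho> \<in> rays W Fan" and PLk: "\<forall>p\<in>set \<kappa>. snd p \<in> PL W Fan"
    and rel: "\<forall>x. relsum Fan \<kappa> x = 0"
    and inv: "\<forall>f\<in>PL (star_space W \<rho>) (star_fan W Fan \<rho>). \<forall>l\<in>L (star_space W \<rho>) (star_fan W Fan \<rho>).
               chiR (\<lambda>x. f x + l x) = chiR f"
    and IH: "\<forall>\<kappa>. (\<forall>p\<in>set \<kappa>. snd p \<in> PL (star_space W \<rho>) (star_fan W Fan \<rho>)) \<longrightarrow>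
               (\<forall>x. relsum (star_fan W Fan \<rho>) \<kappa> x = 0) \<longrightarrow> chisum chiR \<kappa> = 0"
    and recur: "\<forall>f\<in>PL W Fan. chi f = chi (\<lambda>x. f x - courant W Fan \<rho> x) + chiR (star_fun W Fan \<rho> f)"
    and e: "e = 1 \<or> e = -1"
  shows "chisum chi (mv W Fan \<rho> k e \<kappa>) = chisum chi \<kappa>"
proof -
  define \<delta> where "\<delta> = courant W Fan \<rho>"
  define u where "u = ray_gen W \<rho>"
  have \<delta>PL: "\<delta> \<in> PL W Fan" unfolding \<delta>_def courant_eq[OF uf r] by (rule cour_PL[OF uf])
  have \<delta>u: "\<delta> u = 1" unfolding \<delta>_def u_def courant_eq[OF uf r] using cour_gen_val[OF uf r r] by simp
  define G where "G = filter (\<lambda>q. snd q u = k) \<kappa>"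
  have GP: "\<forall>p\<in>set G. snd p \<in> PL W Fan \<and> snd p (ray_gen W \<rho>) = k" unfolding G_def u_def using PLk by auto
  have relG: "\<forall>C\<in>Fan. \<rho> \<subseteq> C \<longrightarrow> (\<forall>y\<in>C. (\<Sum>p\<leftarrow>G. of_int (fst p) * exp (snd p y)) = 0)"
    unfolding G_def u_def by (rule group_vanish_filter[OF uf r PLk rel])
  have "chisum chi (mv W Fan \<rho> k e \<kappa>) =
     (\<Sum>q\<leftarrow>\<kappa>. if snd q u = k then fst q * chi (\<lambda>x. snd q x + of_int e * \<delta> x) else fst q * chi (snd q))"
    unfolding chisum_def mv_def map_map
    by (rule arg_cong[where f=sum_list], rule map_cong) (auto simp: \<delta>_def u_def)
  also have "\<dots> = chisum chi \<kappa> + (\<Sum>q\<leftarrow>\<kappa>. if snd q u = k then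
      fst q * chi (\<lambda>x. snd q x + of_int e * \<delta> x) - fst q * chi (snd q) else 0)"
    unfolding chisum_def by (rule sum_list_if_split)
  also have "(\<Sum>q\<leftarrow>\<kappa>. if snd q u = k then
      fst q * chi (\<lambda>x. snd q x + of_int e * \<delta> x) - fst q * chi (snd q) else 0)
      = (\<Sum>q\<leftarrow>G. fst q * chi (\<lambda>x. snd q x + of_int e * \<delta> x) - fst q * chi (snd q))"
    unfolding G_def by (simp add: sum_list_filter_if)
  also have "\<dots> = 0"
  proof (cases "e = -1")
    case True
    have "(\<Sum>q\<leftarrow>G. fst q * chi (\<lambda>x. snd q x + of_int e * \<delta> x) - fst q * chi (snd q))
        = (\<Sum>q\<leftarrow>G. - (fst q * chiR (star_fun W Fan \<rho> (snd q))))"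
    proof (rule arg_cong[where f=sum_list], rule map_cong[OF refl])
      fix q assume q: "q \<in> set G"
      have "(\<lambda>x. snd q x + of_int e * \<delta> x) = (\<lambda>x. snd q x - courant W Fan \<rho> x)"
        using True unfolding \<delta>_def by simp
      moreover have "chi (snd q) = chi (\<lambda>x. snd q x - courant W Fan \<rho> x) + chiR (star_fun W Fan \<rho> (snd q))"
        using recur GP q by blast
      ultimately show "fst q * chi (\<lambda>x. snd q x + of_int e * \<delta> x) - fst q * chi (snd q)
          = - (fst q * chiR (star_fun W Fan \<rho> (snd q)))" by (simp add: algebra_simps)
    qed
    also have "\<dots> = - (\<Sum>q\<leftarrow>G. fst q * chiR (star_fun W Fan \<rho> (snd q)))"
      by (rule sum_list_neg)
    also have "\<dots> = 0" using star_cancel[OF uf r inv IH GP relG] by simp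
    finally show ?thesis .
  next
    case False
    then have e1: "e = 1" using e by simp
    define G' where "G' = map (\<lambda>q. (fst q, \<lambda>x. snd q x + \<delta> x)) G"
    have G'P: "\<forall>p\<in>set G'. snd p \<in> PL W Fan \<and> snd p (ray_gen W \<rho>) = k + 1"
      unfolding G'_def using GP PL_add_int[OF _ \<delta>PL, of _ 1] \<delta>u unfolding u_def by auto
    have relG': "\<forall>C\<in>Fan. \<rho> \<subseteq> C \<longrightarrow> (\<forall>y\<in>C. (\<Sum>p\<leftarrow>G'. of_int (fst p) * exp (snd p y)) = 0)"
    proof (intro ballI impI)
      fix C y assume C: "C \<in> Fan" "\<rho> \<subseteq> C" "y \<in> C"
      have "(\<Sum>p\<leftarrow>G'. of_int (fst p) * exp (snd p y)) = (\<Sum>p\<leftarrow>G. exp (\<delta> y) * (of_int (fst p) * exp (snd p y)))"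
        unfolding G'_def map_map
        by (rule arg_cong[where f=sum_list], rule map_cong) (auto simp: exp_add)
      also have "\<dots> = exp (\<delta> y) * (\<Sum>p\<leftarrow>G. of_int (fst p) * exp (snd p y))" by (simp add: sum_list_const_mult)
      also have "\<dots> = 0" using relG C by simp
      finally show "(\<Sum>p\<leftarrow>G'. of_int (fst p) * exp (snd p y)) = 0" .
    qed
    have "(\<Sum>q\<leftarrow>G. fst q * chi (\<lambda>x. snd q x + of_int e * \<delta> x) - fst q * chi (snd q))
        = (\<Sum>q\<leftarrow>G'. fst q * chiR (star_fun W Fan \<rho> (snd q)))"
      unfolding G'_def map_map
    proof (rule arg_cong[where f=sum_list], rule map_cong[OF refl])
      fix q assume q: "q \<in> set G"
      have fp: "(\<lambda>x. snd q x + \<delta> x) \<in> PL W Fan" using PL_add_int[OF _ \<delta>PL, of "snd q" 1] GP q by simp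
      have "(\<lambda>x. snd q x + of_int e * \<delta> x) = (\<lambda>x. snd q x + \<delta> x)" using e1 by simp
      moreover have "chi (\<lambda>x. snd q x + \<delta> x) = chi (\<lambda>x. (snd q x + \<delta> x) - courant W Fan \<rho> x)
            + chiR (star_fun W Fan \<rho> (\<lambda>x. snd q x + \<delta> x))"
        using recur fp by blast
      moreover have "(\<lambda>x. (snd q x + \<delta> x) - courant W Fan \<rho> x) = snd q" unfolding \<delta>_def by simp
      ultimately show "fst q * chi (\<lambda>x. snd q x + of_int e * \<delta> x) - fst q * chi (snd q)
          = ((\<lambda>q. fst q * chiR (star_fun W Fan \<rho> (snd q))) \<circ> (\<lambda>q. (fst q, \<lambda>x. snd q x + \<delta> x))) q"
        by (simp add: algebra_simps)
    qed
    also have "\<dots> = 0" using star_cancel[OF uf r inv IH G'P relG'] by simp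
    finally show ?thesis .
  qed
  finally show ?thesis by simp
qed


definition iv :: "(real^'n) set \<Rightarrow> (real^'n) set \<Rightarrow> (real^'n \<Rightarrow> real) \<Rightarrow> int" where
  "iv W \<rho> f = \<lfloor>f (ray_gen W \<rho>)\<rfloor>"

lemma int_val:
  assumes uf: "unimodular_fan W Fan" and f: "f \<in> PL W Fan" and r: "\<rho> \<in> rays W Fan"
  shows "f (ray_gen W \<rho>) = of_int (iv W \<rho> f)"
proof -
  obtain m where m: "m \<in> dualL W" "\<forall>x\<in>\<rho>. f x = m \<bullet> x" using PL_lin[OF f rays_Fan[OF r]] by blast
  have rg: "is_ray_gen W \<rho> (ray_gen W \<rho>)" using ray_gen_spec[OF r] .
  have "ray_gen W \<rho> \<in> \<rho>" using rg_in[OF uf_sub[OF uf] rg] .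
  then have "f (ray_gen W \<rho>) = m \<bullet> ray_gen W \<rho>" using m by blast
  moreover have "ray_gen W \<rho> \<in> Lam" using rg unfolding is_ray_gen_def by blast
  ultimately have "f (ray_gen W \<rho>) \<in> \<int>" using Lam_inner_int[OF m(1)] by simp
  then show ?thesis unfolding iv_def by (auto elim!: Ints_cases)
qed

definition meas :: "(real^'n) set \<Rightarrow> (real^'n) set set \<Rightarrow> (int \<times> (real^'n \<Rightarrow> real)) list \<Rightarrow> nat" where
  "meas W Fan \<kappa> = (\<Sum>\<rho>\<in>rays W Fan. \<Sum>q\<leftarrow>\<kappa>. nat \<bar>iv W \<rho> (snd q) - iv W \<rho> (snd (hd \<kappa>))\<bar>)"

lemma sum_list_le_strict:
  fixes g h :: "'a \<Rightarrow> nat"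
  assumes "\<forall>q\<in>set xs. g q \<le> h q" "\<exists>q\<in>set xs. g q < h q"
  shows "sum_list (map g xs) < sum_list (map h xs)"
  using assms
proof (induction xs)
  case Nil then show ?case by simp
next
  case (Cons a xs)
  have le: "sum_list (map g xs) \<le> sum_list (map h xs)"
    using Cons.prems(1) by (intro sum_list_mono) auto
  show ?case
  proof (cases "g a < h a")
    case True then show ?thesis using le by simp
  next
    case False
    then have "\<exists>q\<in>set xs. g q < h q" using Cons.prems(2) by auto
    then show ?thesis using Cons.IH Cons.prems(1) by fastforce
  qed
qed

lemma sum_list_le':
  fixes g h :: "'a \<Rightarrow> nat"
  assumes "\<forall>q\<in>set xs. g q \<le> h q"
  shows "sum_list (map g xs) \<le> sum_list (map h xs)"
  using assms by (intro sum_list_mono) auto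

lemma rays_fin:
  assumes "unimodular_fan W Fan" shows "finite (rays W Fan)"
proof -
  have "finite Fan" using uf_fin[OF assms] .
  moreover have "rays W Fan \<subseteq> Fan" unfolding rays_def by blast
  ultimately show ?thesis using finite_subset by blast
qed

lemma meas_decr:
  fixes W :: "(real^'n) set"
  assumes uf: "unimodular_fan W Fan" and r: "\<rho> \<in> rays W Fan" and PLk: "\<forall>p\<in>set \<kappa>. snd p \<in> PL W Fan"
    and k: "k = of_int k'" and q0: "q0 \<in> set \<kappa>" "iv W \<rho> (snd q0) = k'" "k' \<noteq> iv W \<rho> (snd (hd \<kappa>))"
    and e: "e = (if k' < iv W \<rho> (snd (hd \<kappa>)) then 1 else -1)"
  shows "meas W Fan (mv W Fan \<rho> k e \<kappa>) < meas W Fan \<kappa>"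
proof -
  define \<delta> where "\<delta> = courant W Fan \<rho>"
  define u where "u = ray_gen W \<rho>"
  have \<delta>PL: "\<delta> \<in> PL W Fan" unfolding \<delta>_def courant_eq[OF uf r] by (rule cour_PL[OF uf])
  have \<delta>v: "\<rho>' \<in> rays W Fan \<Longrightarrow> \<delta> (ray_gen W \<rho>') = (if \<rho>' = \<rho> then 1 else 0)" for \<rho>'
    unfolding \<delta>_def courant_eq[OF uf r] using cour_gen_val[OF uf r] by simp
  define mf where "mf q = (if snd q u = k then (fst q, \<lambda>x. snd q x + of_int e * \<delta> x) else q)" for q :: "int \<times> (real^'n \<Rightarrow> real)"
  have mvm: "mv W Fan \<rho> k e \<kappa> = map mf \<kappa>" unfolding mv_def mf_def \<delta>_def u_def by simp
  have ne: "\<kappa> \<noteq> []" using q0 by auto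
  define f1 where "f1 = snd (hd \<kappa>)"
  have hdk: "hd \<kappa> \<in> set \<kappa>" using ne by simp
  have f1PL: "f1 \<in> PL W Fan" using PLk hdk unfolding f1_def by blast
  have f1u: "f1 u \<noteq> k" using int_val[OF uf f1PL r] k q0(3) unfolding u_def f1_def by simp
  have hd': "snd (hd (mv W Fan \<rho> k e \<kappa>)) = f1" unfolding mvm using ne f1u unfolding mf_def f1_def
    by (cases \<kappa>) auto
  have ivmf: "iv W \<rho>' (snd (mf q)) = iv W \<rho>' (snd q) + (if snd q u = k \<and> \<rho>' = \<rho> then e else 0)"
    if q: "q \<in> set \<kappa>" and r': "\<rho>' \<in> rays W Fan" for q \<rho>'
  proof (cases "snd q u = k")
    case False then show ?thesis unfolding mf_def by simp
  next
    case True
    have "snd (mf q) (ray_gen W \<rho>') = snd q (ray_gen W \<rho>') + of_int e * \<delta> (ray_gen W \<rho>')"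
      unfolding mf_def using True by simp
    also have "\<dots> = of_int (iv W \<rho>' (snd q) + (if \<rho>' = \<rho> then e else 0))"
      using int_val[OF uf _ r'] PLk q \<delta>v[OF r'] by auto
    finally show ?thesis unfolding iv_def using True by simp
  qed
  define d where "d \<rho>' q = nat \<bar>iv W \<rho>' (snd q) - iv W \<rho>' f1\<bar>"
    for \<rho>' :: "(real^'n) set" and q :: "int \<times> (real^'n \<Rightarrow> real)"
  have "meas W Fan (mv W Fan \<rho> k e \<kappa>) = (\<Sum>\<rho>'\<in>rays W Fan. \<Sum>q\<leftarrow>\<kappa>. d \<rho>' (mf q))"
    unfolding meas_def hd' d_def by (simp add: mvm o_def)
  also have "\<dots> < (\<Sum>\<rho>'\<in>rays W Fan. \<Sum>q\<leftarrow>\<kappa>. d \<rho>' q)"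
  proof (rule sum_strict_mono_ex1[OF rays_fin[OF uf]])
    have f1v: "iv W \<rho>' f1 = iv W \<rho>' (snd (hd \<kappa>))" for \<rho>' :: "(real^'n) set" unfolding f1_def ..
    have le1: "d \<rho>' (mf q) \<le> d \<rho>' q" if "q \<in> set \<kappa>" "\<rho>' \<in> rays W Fan" for q \<rho>'
    proof (cases "snd q u = k \<and> \<rho>' = \<rho>")
      case False
      have "iv W \<rho>' (snd (mf q)) = iv W \<rho>' (snd q)" using ivmf[OF that] False by (simp only: if_False if_P)
      then show ?thesis unfolding d_def by simp
    next
      case True
      have "iv W \<rho> (snd q) = k'" using int_val[OF uf _ r] PLk that(1) True k unfolding u_def iv_def by auto
      then show ?thesis unfolding d_def using ivmf[OF that] True e q0(3) f1v by auto
    qed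
    show "\<forall>\<rho>'\<in>rays W Fan. (\<Sum>q\<leftarrow>\<kappa>. d \<rho>' (mf q)) \<le> (\<Sum>q\<leftarrow>\<kappa>. d \<rho>' q)"
      using le1 by (intro ballI sum_list_le') auto
    have "snd q0 u = k" using int_val[OF uf _ r] PLk q0 k unfolding u_def by auto
    then have "d \<rho> (mf q0) < d \<rho> q0" unfolding d_def using ivmf[OF q0(1) r] q0(2,3) e f1v by auto
    then have "(\<Sum>q\<leftarrow>\<kappa>. d \<rho> (mf q)) < (\<Sum>q\<leftarrow>\<kappa>. d \<rho> q)"
      using le1 q0(1) r by (intro sum_list_le_strict) auto
    then show "\<exists>\<rho>'\<in>rays W Fan. (\<Sum>q\<leftarrow>\<kappa>. d \<rho>' (mf q)) < (\<Sum>q\<leftarrow>\<kappa>. d \<rho>' q)" using r by blast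
  qed
  also have "\<dots> = meas W Fan \<kappa>" unfolding meas_def d_def f1_def ..
  finally show ?thesis .
qed


lemma of_int_sum_list_map: "(\<Sum>q\<leftarrow>xs. (of_int (g q) :: real)) = of_int (\<Sum>q\<leftarrow>xs. g q)"
  by (induction xs) auto

lemma main_step:
  fixes W :: "(real^'n) set" and chi :: "(real^'n \<Rightarrow> real) \<Rightarrow> int"
  assumes uf: "unimodular_fan W Fan"
    and stars: "\<forall>\<rho>\<in>rays W Fan.
      (\<forall>f\<in>PL (star_space W \<rho>) (star_fan W Fan \<rho>). \<forall>l\<in>L (star_space W \<rho>) (star_fan W Fan \<rho>).
               chis \<rho> (\<lambda>x. f x + l x) = chis \<rho> f) \<and>
      (\<forall>\<kappa>. (\<forall>p\<in>set \<kappa>. snd p \<in> PL (star_space W \<rho>) (star_fan W Fan \<rho>)) \<longrightarrow>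
               (\<forall>x. relsum (star_fan W Fan \<rho>) \<kappa> x = 0) \<longrightarrow> chisum (chis \<rho>) \<kappa> = 0)"
    and recur: "\<forall>f\<in>PL W Fan. \<forall>\<rho>\<in>rays W Fan.
        chi f = chi (\<lambda>x. f x - courant W Fan \<rho> x) + chis \<rho> (star_fun W Fan \<rho> f)"
  shows "(\<forall>p\<in>set \<kappa>. snd p \<in> PL W Fan) \<longrightarrow> (\<forall>x. relsum Fan \<kappa> x = 0) \<longrightarrow> chisum chi \<kappa> = 0"
proof (induction "meas W Fan \<kappa>" arbitrary: \<kappa> rule: less_induct)
  case less
  show ?case
  proof (intro impI)
    assume PLk: "\<forall>p\<in>set \<kappa>. snd p \<in> PL W Fan" and rel: "\<forall>x. relsum Fan \<kappa> x = 0"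
    show "chisum chi \<kappa> = 0"
    proof (cases "\<exists>\<rho>\<in>rays W Fan. \<exists>q\<in>set \<kappa>. iv W \<rho> (snd q) \<noteq> iv W \<rho> (snd (hd \<kappa>))")
      case True
      then obtain \<rho> q0 where r: "\<rho> \<in> rays W Fan" and q0: "q0 \<in> set \<kappa>" "iv W \<rho> (snd q0) \<noteq> iv W \<rho> (snd (hd \<kappa>))"
        by blast
      define k' where "k' = iv W \<rho> (snd q0)"
      define e :: int where "e = (if k' < iv W \<rho> (snd (hd \<kappa>)) then 1 else -1)"
      have e: "e = 1 \<or> e = -1" unfolding e_def by simp
      define \<kappa>' where "\<kappa>' = mv W Fan \<rho> (of_int k') e \<kappa>"
      have dec: "meas W Fan \<kappa>' < meas W Fan \<kappa>"
        unfolding \<kappa>'_def by (rule meas_decr[OF uf r PLk refl q0(1) k'_def[symmetric] q0(2)[folded k'_def] e_def])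
      have PL': "\<forall>p\<in>set \<kappa>'. snd p \<in> PL W Fan" unfolding \<kappa>'_def by (rule mv_PL[OF uf r PLk])
      have rel': "\<forall>x. relsum Fan \<kappa>' x = 0" unfolding \<kappa>'_def by (rule mv_rel[OF uf r PLk rel])
      have c0: "chisum chi \<kappa>' = 0" using less.hyps[OF dec] PL' rel' by blast
      have inv_r: "\<forall>f\<in>PL (star_space W \<rho>) (star_fan W Fan \<rho>). \<forall>l\<in>L (star_space W \<rho>) (star_fan W Fan \<rho>).
               chis \<rho> (\<lambda>x. f x + l x) = chis \<rho> f" using stars r by blast
      have IH_r: "\<forall>\<kappa>. (\<forall>p\<in>set \<kappa>. snd p \<in> PL (star_space W \<rho>) (star_fan W Fan \<rho>)) \<longrightarrow>
               (\<forall>x. relsum (star_fan W Fan \<rho>) \<kappa> x = 0) \<longrightarrow> chisum (chis \<rho>) \<kappa> = 0" using stars r by blast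
      have rec_r: "\<forall>f\<in>PL W Fan. chi f = chi (\<lambda>x. f x - courant W Fan \<rho> x) + chis \<rho> (star_fun W Fan \<rho> f)"
        using recur r by blast
      have c1: "chisum chi \<kappa>' = chisum chi \<kappa>"
        unfolding \<kappa>'_def by (rule mv_chi[OF uf r PLk rel inv_r IH_r rec_r e])
      show ?thesis using c0 c1 by simp
    next
      case False
      show ?thesis
      proof (cases "\<kappa> = []")
        case True then show ?thesis unfolding chisum_def by simp
      next
        case ne: False
        define f1 where "f1 = snd (hd \<kappa>)"
        have f1PL: "f1 \<in> PL W Fan" using PLk ne unfolding f1_def by simp
        have allf1: "snd q = f1" if q: "q \<in> set \<kappa>" for q
        proof (rule PL_determined[OF uf _ f1PL])
          show "snd q \<in> PL W Fan" using PLk q by blast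
          show "\<forall>\<rho>\<in>rays W Fan. snd q (ray_gen W \<rho>) = f1 (ray_gen W \<rho>)"
            using False q int_val[OF uf _ ] PLk f1PL unfolding f1_def by (metis (no_types, lifting))
        qed
        have "chisum chi \<kappa> = (\<Sum>q\<leftarrow>\<kappa>. fst q * chi f1)"
          unfolding chisum_def using allf1 by (intro arg_cong[where f=sum_list] map_cong) auto
        also have "\<dots> = (\<Sum>q\<leftarrow>\<kappa>. fst q) * chi f1" by (simp add: sum_list_mult_const)
        finally have cs: "chisum chi \<kappa> = (\<Sum>q\<leftarrow>\<kappa>. fst q) * chi f1" .
        have z: "(0::real^'n) \<in> supp Fan"
          using uf_W[OF uf] subspace_0[OF uf_sub[OF uf]] unfolding supp_def by blast
        have "relsum Fan \<kappa> 0 = (\<Sum>q\<leftarrow>\<kappa>. of_int (fst q) * exp (f1 0))"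
          unfolding relsum_def expPL_def using allf1 z by (intro arg_cong[where f=sum_list] map_cong) auto
        also have "\<dots> = (\<Sum>q\<leftarrow>\<kappa>. of_int (fst q)) * exp (f1 0)" by (simp add: sum_list_mult_const)
        also have "\<dots> = of_int (\<Sum>q\<leftarrow>\<kappa>. fst q) * exp (f1 0)" by (simp add: of_int_sum_list_map)
        finally have "of_int (\<Sum>q\<leftarrow>\<kappa>. fst q) * exp (f1 0) = (0::real)" using rel by simp
        then have "(\<Sum>q\<leftarrow>\<kappa>. fst q) = 0" by simp
        then show ?thesis using cs by simp
      qed
    qed
  qed
qed

lemma ehr_facts:
  assumes "ehrhart_with W Fan chi"
  shows "\<forall>f\<in>PL W Fan. \<forall>l\<in>L W Fan. chi (\<lambda>x. f x + l x) = chi f" "unimodular_fan W Fan"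
  using assms by (cases rule: ehrhart_with.cases; auto)+

lemma main:
  fixes W :: "(real^'n) set"
  assumes "ehrhart_with W Fan chi"
  shows "\<forall>\<kappa>. (\<forall>p\<in>set \<kappa>. snd p \<in> PL W Fan) \<longrightarrow> (\<forall>x. relsum Fan \<kappa> x = 0) \<longrightarrow> chisum chi \<kappa> = 0"
  using assms
proof (induction rule: ehrhart_with.induct)
  case (1 W Fan chis chi)
  have uf: "unimodular_fan W Fan" using 1 by blast
  have rec: "\<forall>f\<in>PL W Fan. \<forall>\<rho>\<in>rays W Fan.
        chi f = chi (\<lambda>x. f x - courant W Fan \<rho> x) + chis \<rho> (star_fun W Fan \<rho> f)" using 1 by blast
  have st: "\<forall>\<rho>\<in>rays W Fan. ehrhart_with (star_space W \<rho>) (star_fan W Fan \<rho>) (chis \<rho>) \<and>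
     (\<forall>\<kappa>. (\<forall>p\<in>set \<kappa>. snd p \<in> PL (star_space W \<rho>) (star_fan W Fan \<rho>)) \<longrightarrow>
               (\<forall>x. relsum (star_fan W Fan \<rho>) \<kappa> x = 0) \<longrightarrow> chisum (chis \<rho>) \<kappa> = 0)"
    using 1 by blast
  have stars: "\<forall>\<rho>\<in>rays W Fan.
      (\<forall>f\<in>PL (star_space W \<rho>) (star_fan W Fan \<rho>). \<forall>l\<in>L (star_space W \<rho>) (star_fan W Fan \<rho>).
               chis \<rho> (\<lambda>x. f x + l x) = chis \<rho> f) \<and>
      (\<forall>\<kappa>. (\<forall>p\<in>set \<kappa>. snd p \<in> PL (star_space W \<rho>) (star_fan W Fan \<rho>)) \<longrightarrow>
               (\<forall>x. relsum (star_fan W Fan \<rho>) \<kappa> x = 0) \<longrightarrow> chisum (chis \<rho>) \<kappa> = 0)"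
    using st ehr_facts(1) by blast
  show ?case using main_step[OF uf stars rec] by blast
qed


definition reps :: "(real^'n) set \<Rightarrow> (real^'n) set set \<Rightarrow> (real^'n \<Rightarrow> real) \<Rightarrow> (int \<times> (real^'n \<Rightarrow> real)) list \<Rightarrow> bool" where
  "reps W Fan a \<kappa> \<longleftrightarrow> (\<forall>p\<in>set \<kappa>. snd p \<in> PL W Fan) \<and> a = relsum Fan \<kappa>"

definition negl :: "(int \<times> (real^'n \<Rightarrow> real)) list \<Rightarrow> (int \<times> (real^'n \<Rightarrow> real)) list" where
  "negl \<kappa> = map (\<lambda>p. (- fst p, snd p)) \<kappa>"

definition prodl :: "(int \<times> (real^'n \<Rightarrow> real)) list \<Rightarrow> (int \<times> (real^'n \<Rightarrow> real)) list \<Rightarrow> (int \<times> (real^'n \<Rightarrow> real)) list" where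
  "prodl \<kappa>1 \<kappa>2 = concat (map (\<lambda>p. map (\<lambda>q. (fst p * fst q, \<lambda>x. snd q x + snd p x)) \<kappa>2) \<kappa>1)"

definition shiftl :: "(real^'n \<Rightarrow> real) \<Rightarrow> (int \<times> (real^'n \<Rightarrow> real)) list \<Rightarrow> (int \<times> (real^'n \<Rightarrow> real)) list" where
  "shiftl h \<kappa> = map (\<lambda>q. (fst q, \<lambda>x. snd q x + h x)) \<kappa>"

lemma relsum_append: "relsum Fan (a @ b) x = relsum Fan a x + relsum Fan b x"
  unfolding relsum_def by simp
lemma chisum_append: "chisum chi (a @ b) = chisum chi a + chisum chi b"
  unfolding chisum_def by simp
lemma relsum_negl: "relsum Fan (negl a) x = - relsum Fan a x"
  unfolding relsum_def negl_def by (induction a) auto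
lemma chisum_negl: "chisum chi (negl a) = - chisum chi a"
  unfolding chisum_def negl_def by (induction a) auto

lemma expPL_add: "expPL Fan (\<lambda>x. f x + g x) x = expPL Fan f x * expPL Fan g x"
  unfolding expPL_def by (simp add: exp_add)

lemma relsum_prodl: "relsum Fan (prodl a b) x = relsum Fan a x * relsum Fan b x"
proof (induction a)
  case Nil then show ?case unfolding relsum_def prodl_def by simp
next
  case (Cons p a)
  have "relsum Fan (map (\<lambda>q. (fst p * fst q, \<lambda>x. snd q x + snd p x)) b) x
      = of_int (fst p) * expPL Fan (snd p) x * relsum Fan b x"
    unfolding relsum_def
    by (induction b) (auto simp: expPL_add algebra_simps)
  then show ?case using Cons unfolding prodl_def relsum_def by (simp add: algebra_simps)
qed

lemma chisum_shift_prodl: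
  "chisum chi (shiftl h (prodl a b)) = (\<Sum>p\<leftarrow>a. fst p * chisum chi (shiftl (\<lambda>x. snd p x + h x) b))"
proof (induction a)
  case Nil then show ?case unfolding chisum_def prodl_def shiftl_def by simp
next
  case (Cons p a)
  have "chisum chi (shiftl h (map (\<lambda>q. (fst p * fst q, \<lambda>x. snd q x + snd p x)) b))
      = fst p * chisum chi (shiftl (\<lambda>x. snd p x + h x) b)"
    unfolding chisum_def shiftl_def
    by (induction b) (auto simp: algebra_simps add.assoc)
  then show ?case using Cons unfolding prodl_def shiftl_def chisum_def by (simp add: algebra_simps)
qed

lemma PL_zero: "(\<lambda>_. 0) \<in> PL W Fan"
proof -
  have "0 \<in> dualL W" unfolding dualL_def by simp
  then show ?thesis unfolding PL_def by (intro CollectI conjI allI impI ballI bexI[OF _ \<open>0 \<in> dualL W\<close>]) simp_all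
qed

lemma L_PL:
  assumes "l \<in> L W Fan" shows "l \<in> PL W Fan"
proof -
  obtain m where m: "m \<in> dualL W" "l = (\<lambda>x. if x \<in> supp Fan then m \<bullet> x else 0)"
    using assms unfolding L_def by blast
  have "\<forall>x\<in>C. l x = m \<bullet> x" if "C \<in> Fan" for C using m(2) that unfolding supp_def by auto
  then show ?thesis unfolding PL_def using m by auto
qed

lemma PL_add: "f \<in> PL W Fan \<Longrightarrow> g \<in> PL W Fan \<Longrightarrow> (\<lambda>x. f x + g x) \<in> PL W Fan"
  using PL_add_int[of f W Fan g 1] by simp

lemma PE_reps: "a \<in> PE W Fan \<Longrightarrow> \<exists>\<kappa>. reps W Fan a \<kappa>"
proof (induction rule: PE.induct)
  case (gen f)
  show ?case by (rule exI[of _ "[(1, f)]"]) (use gen in \<open>auto simp: reps_def relsum_def\<close>)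
next
  case (add a b)
  then obtain ka kb where k: "reps W Fan a ka" "reps W Fan b kb" by blast
  have "(\<lambda>x. a x + b x) = relsum Fan (ka @ kb)"
    using k unfolding reps_def by (intro ext) (simp add: relsum_append)
  moreover have "\<forall>p\<in>set (ka @ kb). snd p \<in> PL W Fan" using k unfolding reps_def by auto
  ultimately show ?case unfolding reps_def by blast
next
  case (neg a)
  then obtain ka where ka: "reps W Fan a ka" by blast
  have "(\<lambda>x. - a x) = relsum Fan (negl ka)"
    using ka unfolding reps_def by (intro ext) (simp add: relsum_negl)
  moreover have "\<forall>p\<in>set (negl ka). snd p \<in> PL W Fan" using ka unfolding reps_def negl_def by auto
  ultimately show ?case unfolding reps_def by blast
next
  case (mult a b)
  then obtain ka kb where k: "reps W Fan a ka" "reps W Fan b kb" by blast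
  have "\<forall>p\<in>set (prodl ka kb). snd p \<in> PL W Fan"
    using k unfolding reps_def prodl_def by (auto intro!: PL_add)
  moreover have "(\<lambda>x. a x * b x) = relsum Fan (prodl ka kb)"
    using k unfolding reps_def by (intro ext) (simp add: relsum_prodl)
  ultimately show ?case unfolding reps_def by blast
qed

lemma reps_welldef:
  assumes e: "ehrhart_with W Fan chi" and "reps W Fan a k1" "reps W Fan a k2"
  shows "chisum chi k1 = chisum chi k2"
proof -
  have "\<forall>p\<in>set (k1 @ negl k2). snd p \<in> PL W Fan" using assms unfolding reps_def negl_def by auto
  moreover have "\<forall>x. relsum Fan (k1 @ negl k2) x = 0"
    using assms unfolding reps_def by (auto simp: relsum_append relsum_negl)
  ultimately have "chisum chi (k1 @ negl k2) = 0" using main[OF e] by blast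
  then show ?thesis by (simp add: chisum_append chisum_negl)
qed

lemma ideal_reps:
  assumes e: "ehrhart_with W Fan chi"
  shows "a \<in> PE_ideal W Fan \<Longrightarrow> \<exists>\<kappa>. reps W Fan a \<kappa> \<and> (\<forall>h\<in>PL W Fan. chisum chi (shiftl h \<kappa>) = 0)"
proof (induction rule: PE_ideal.induct)
  case (gen l)
  have lP: "l \<in> PL W Fan" using L_PL[OF gen] .
  have inv: "\<forall>f\<in>PL W Fan. \<forall>l\<in>L W Fan. chi (\<lambda>x. f x + l x) = chi f" using ehr_facts(1)[OF e] .
  show ?case
  proof (intro exI conjI)
    show "reps W Fan (\<lambda>x. expPL Fan l x - expPL Fan (\<lambda>_. 0) x) [(1, l), (-1, \<lambda>_. 0)]"
      unfolding reps_def relsum_def using lP PL_zero by auto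
    show "\<forall>h\<in>PL W Fan. chisum chi (shiftl h [(1, l), (-1, \<lambda>_. 0)]) = 0"
    proof
      fix h assume h: "h \<in> PL W Fan"
      have "chi (\<lambda>x. h x + l x) = chi h" using inv h gen by blast
      moreover have "(\<lambda>x. l x + h x) = (\<lambda>x. h x + l x)" by (simp add: add.commute)
      ultimately show "chisum chi (shiftl h [(1, l), (-1, \<lambda>_. 0)]) = 0"
        unfolding chisum_def shiftl_def by simp
    qed
  qed
next
  case zero
  show ?case by (rule exI[of _ "[]"]) (auto simp: reps_def relsum_def chisum_def shiftl_def)
next
  case (add a b)
  then obtain ka kb where "reps W Fan a ka \<and> (\<forall>h\<in>PL W Fan. chisum chi (shiftl h ka) = 0)"
    "reps W Fan b kb \<and> (\<forall>h\<in>PL W Fan. chisum chi (shiftl h kb) = 0)" by blast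
  then show ?case
    by (intro exI[of _ "ka @ kb"]) (auto simp: reps_def relsum_append shiftl_def chisum_append)
next
  case (mult p a)
  obtain kp where kp: "reps W Fan p kp" using PE_reps[OF mult(1)] by blast
  obtain ka where ka: "reps W Fan a ka" "\<forall>h\<in>PL W Fan. chisum chi (shiftl h ka) = 0" using mult(3) by blast
  show ?case
  proof (intro exI conjI)
    have "\<forall>q\<in>set (prodl kp ka). snd q \<in> PL W Fan"
      using kp ka unfolding reps_def prodl_def by (auto intro!: PL_add)
    then show "reps W Fan (\<lambda>x. p x * a x) (prodl kp ka)"
      using kp ka unfolding reps_def by (auto simp: relsum_prodl)
    show "\<forall>h\<in>PL W Fan. chisum chi (shiftl h (prodl kp ka)) = 0"
    proof
      fix h assume h: "h \<in> PL W Fan"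
      have "chisum chi (shiftl h (prodl kp ka)) = (\<Sum>q\<leftarrow>kp. fst q * chisum chi (shiftl (\<lambda>x. snd q x + h x) ka))"
        by (rule chisum_shift_prodl)
      also have "\<dots> = 0"
        using kp ka(2) h unfolding reps_def by (intro sum_list_zero) (auto intro!: PL_add)
      finally show "chisum chi (shiftl h (prodl kp ka)) = 0" .
    qed
  qed
qed

theorem corollary5:
  fixes W :: "(real^'n) set" and Fan :: "(real^'n) set set"
    and chi :: "(real^'n \<Rightarrow> real) \<Rightarrow> int"
  assumes "ehrhart_with W Fan chi"
  shows "\<exists>g :: (real^'n \<Rightarrow> real) \<Rightarrow> int.
           (\<forall>a\<in>PE W Fan. \<forall>b\<in>PE W Fan. g (\<lambda>x. a x + b x) = g a + g b) \<and>
           (\<forall>a\<in>PE_ideal W Fan. g a = 0) \<and>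
           (\<forall>f\<in>PL W Fan. g (expPL Fan f) = chi f)"
proof -
  define g where "g a = (if \<exists>\<kappa>. reps W Fan a \<kappa> then chisum chi (SOME \<kappa>. reps W Fan a \<kappa>) else 0)" for a
  have gval: "g a = chisum chi \<kappa>" if "reps W Fan a \<kappa>" for a \<kappa>
  proof -
    have "reps W Fan a (SOME \<kappa>. reps W Fan a \<kappa>)" using that by (rule someI)
    have ex: "\<exists>\<kappa>. reps W Fan a \<kappa>" using that by blast
    have "g a = chisum chi (SOME \<kappa>. reps W Fan a \<kappa>)" unfolding g_def using ex by simp
    also have "\<dots> = chisum chi \<kappa>" by (rule reps_welldef[OF assms \<open>reps W Fan a (SOME \<kappa>. reps W Fan a \<kappa>)\<close> that])
    finally show ?thesis .
  qed
  show ?thesis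
  proof (intro exI[of _ g] conjI ballI)
    fix a b assume a: "a \<in> PE W Fan" and b: "b \<in> PE W Fan"
    obtain ka kb where k: "reps W Fan a ka" "reps W Fan b kb" using PE_reps a b by blast
    have "reps W Fan (\<lambda>x. a x + b x) (ka @ kb)" using k by (auto simp: reps_def relsum_append)
    then show "g (\<lambda>x. a x + b x) = g a + g b" using gval k by (simp add: chisum_append)
  next
    fix a assume a: "a \<in> PE_ideal W Fan"
    obtain k where k: "reps W Fan a k" "\<forall>h\<in>PL W Fan. chisum chi (shiftl h k) = 0"
      using ideal_reps[OF assms a] by blast
    have "chisum chi (shiftl (\<lambda>_. 0) k) = 0" using k(2) PL_zero by blast
    moreover have "shiftl (\<lambda>_. 0) k = k" unfolding shiftl_def by (induction k) auto
    ultimately show "g a = 0" using gval[OF k(1)] by simp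
  next
    fix f assume f: "f \<in> PL W Fan"
    have "reps W Fan (expPL Fan f) [(1, f)]" using f unfolding reps_def relsum_def by auto
    then show "g (expPL Fan f) = chi f" using gval unfolding chisum_def by simp
  qed
qed


end
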